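(* In the setting described in the context, if a bounded linear operator $T:\mathcal{H}\to\mathcal{H}$ is partially localized and weakly compact, then $$\lim_{N\to\infty}\sup_{f\in\mathcal{H},\ \|f\|_{\mathcal{H}}\le1}\int_{G\setminus E_N}\|\mathcal{W}Tf(z)\|_{H_1}^2\,dz=0.$$
   Context: Setting: $H_1,H_2$ are separable Hilbert spaces, $G$ is a separable locally compact group with left Haar measure $dz$. $\{E_N\}_{N\in\mathbb{N}}$ is a sequence of open precompact subsets of $G$ with $E_N\subseteq E_{N+1}$, $E_N^{-1}=E_N$, $E_NE_N\subseteq E_{2N}$, $\bigcup_NE_N=G$. $\{\psi_z\}_{z\in G}\subseteq H_2$ is a bounded, norm-continuous continuous Parseval frame: $\langle f,g\rangle_{H_2}=\int_G\langle f,\psi_z\rangle\langle\psi_z,g\rangle\,dz$. $\mathcal{H}=H_1\widehat\otimes H_2$. For $f\in\mathcal{H}$, $g\in H_2$, $\langle f,g\rangle_{H_2}\in H_1$ is the continuous extension of $\sum c_na_n\otimes b_n\mapsto\sum c_na_n\langle b_n,g\rangle_{H_2}$; $\mathcal{W}f(z)=\langle f,\psi_z\rangle_{H_2}$. $T_{(z,w)}h:=\langle T(h\otimes\psi_z),\psi_w\rangle_{H_2}$ for $h\in H_1$. Partially localized: $T$ is bounded on $\mathcal{H}$ and there is a continuous $\omega:G\to(0,\infty)$ with $\omega(zw)\le\omega(z)\omega(w)$ such that $\sup_z\omega(z)^{-1}\int_G\|T_{(z,w)}\|\omega(w)\,dw<\infty$, $\sup_w\omega(w)^{-1}\int_G\|T_{(z,w)}\|\omega(z)\,dz<\infty$,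 $\lim_{N\to\infty}\sup_z\omega(z)^{-1}\int_{G\setminus zE_N}\|T_{(z,w)}\|\omega(w)\,dw=0$, and $\lim_{N\to\infty}\sup_w\omega(w)^{-1}\int_{G\setminus wE_N}\|T_{(z,w)}\|\omega(z)\,dz=0$. Weakly compact: each $T_{(z,w)}$ is compact on $H_1$ and for every $M>0$, $\lim_{z\to\infty}\sup_{w\in zE_M}\|T_{(z,w)}\|_{H_1\to H_1}=0$, where $z\to\infty$ means $z$ eventually leaves every compact subset of $G$. *)

theory Defs
  imports "HOL-Analysis.Analysis"
begin

class complex_vector = real_vector +
  fixes scaleC :: "complex \<Rightarrow> 'a \<Rightarrow> 'a" (infixr "*\<^sub>C" 75)
  assumes scaleC_add_right: "a *\<^sub>C (x + y) = a *\<^sub>C x + a *\<^sub>C y"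
    and scaleC_add_left: "(a + b) *\<^sub>C x = a *\<^sub>C x + b *\<^sub>C x"
    and scaleC_scaleC: "a *\<^sub>C (b *\<^sub>C x) = (a * b) *\<^sub>C x"
    and scaleC_one: "1 *\<^sub>C x = x"
    and scaleR_scaleC: "scaleR r x = complex_of_real r *\<^sub>C x"

class complex_inner = complex_vector + real_inner +
  fixes cinner :: "'a \<Rightarrow> 'a \<Rightarrow> complex"
  assumes cinner_add_left: "cinner (x + y) z = cinner x z + cinner y z"
    and cinner_scaleC_left: "cinner (a *\<^sub>C x) y = a * cinner x y"
    and cinner_commute: "cinner x y = cnj (cinner y x)"
    and Re_cinner: "Re (cinner x y) = inner x y"

class complex_hilbert = complex_inner + complete_space

instantiation complex :: complex_hilbert
begin
definition scaleC_complex :: "complex \<Rightarrow> complex \<Rightarrow> complex" where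
  "scaleC_complex a x = a * x"
definition cinner_complex :: "complex \<Rightarrow> complex \<Rightarrow> complex" where
  "cinner_complex x y = x * cnj y"
instance
  by standard (auto simp: scaleC_complex_def cinner_complex_def algebra_simps
      inner_complex_def scaleR_conv_of_real)
end

definition bounded_clinear :: "('a::complex_inner \<Rightarrow> 'b::complex_inner) \<Rightarrow> bool" where
  "bounded_clinear f \<longleftrightarrow> bounded_linear f \<and> (\<forall>c x. f (c *\<^sub>C x) = c *\<^sub>C f x)"

definition compact_operator :: "('a::complex_inner \<Rightarrow> 'b::complex_inner) \<Rightarrow> bool" where
  "compact_operator K \<longleftrightarrow> bounded_clinear K \<and> compact (closure (K ` cball 0 1))"

definition cspan :: "'a::complex_vector set \<Rightarrow> 'a set" where
  "cspan S = {x. \<exists>F c. finite F \<and> F \<subseteq> S \<and> x = (\<Sum>s\<in>F. c s *\<^sub>C s)}"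

text \<open>ten realizes the Hilbert space tensor product H1 \<otimes> H2 as the
  space 'h: the elementary tensors have the product inner product and
  span a dense subspace (this determines H1 \<otimes> H2 up to unitary isomorphism).\<close>
definition hilbert_tensor ::
  "('a::complex_hilbert \<Rightarrow> 'b::complex_hilbert \<Rightarrow> 'h::complex_hilbert) \<Rightarrow> bool" where
  "hilbert_tensor ten \<longleftrightarrow>
     (\<forall>a a' b. ten (a + a') b = ten a b + ten a' b) \<and>
     (\<forall>a b b'. ten a (b + b') = ten a b + ten a b') \<and>
     (\<forall>c a b. ten (c *\<^sub>C a) b = c *\<^sub>C ten a b) \<and>
     (\<forall>c a b. ten a (c *\<^sub>C b) = c *\<^sub>C ten a b) \<and>
     (\<forall>a b c d. cinner (ten a b) (ten c d) = cinner a c * cinner b d) \<and>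
     closure (cspan (range (\<lambda>(a, b). ten a b))) = UNIV"

text \<open>Partial inner product \<langle>f,g\<rangle>_{H2} \<in> H1 for f \<in> H1 \<otimes> H2, g \<in> H2:
  the element x of H1 with \<langle>x,h\<rangle> = \<langle>f, h \<otimes> g\<rangle> for all h; on
  finite sums of elementary tensors it is \<Sum> c_n a_n \<langle>b_n,g\<rangle>.\<close>
definition pinner :: "('a::complex_hilbert \<Rightarrow> 'b::complex_hilbert \<Rightarrow> 'h::complex_hilbert)
    \<Rightarrow> 'h \<Rightarrow> 'b \<Rightarrow> 'a" where
  "pinner ten f g = (THE x. \<forall>h. cinner x h = cinner f (ten h g))"

definition Tloc :: "('a::complex_hilbert \<Rightarrow> 'b::complex_hilbert \<Rightarrow> 'h::complex_hilbert)
    \<Rightarrow> ('g \<Rightarrow> 'b) \<Rightarrow> ('h \<Rightarrow> 'h) \<Rightarrow> 'g \<Rightarrow> 'g \<Rightarrow> 'a \<Rightarrow> 'a" where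
  "Tloc ten \<psi> T z w = (\<lambda>h. pinner ten (T (ten h (\<psi> z))) (\<psi> w))"

text \<open>The group G is written additively (not necessarily commutative):
  z + w is the product zw, -z the inverse.\<close>

definition locally_compact_type :: "'g::topological_space itself \<Rightarrow> bool" where
  "locally_compact_type _ \<longleftrightarrow> (\<forall>x::'g. \<exists>U K. open U \<and> compact K \<and> x \<in> U \<and> U \<subseteq> K)"

text \<open>Left Haar measure: nonzero Borel measure, left invariant, finite on compact
  sets and positive on nonempty open sets (in a second countable locally compact
  Hausdorff group such measures are automatically Radon).\<close>
definition left_haar :: "'g::topological_group_add measure \<Rightarrow> bool" where
  "left_haar \<mu> \<longleftrightarrow> sets \<mu> = sets borel \<and>
     (\<forall>z. \<forall>A\<in>sets borel. emeasure \<mu> ((\<lambda>a. z + a) ` A) = emeasure \<mu> A) \<and>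
     (\<forall>K. compact K \<longrightarrow> emeasure \<mu> K < \<infinity>) \<and>
     (\<forall>U. open U \<and> U \<noteq> {} \<longrightarrow> emeasure \<mu> U > 0)"

definition cont_parseval_frame :: "'g measure \<Rightarrow> ('g \<Rightarrow> 'b::complex_hilbert) \<Rightarrow> bool" where
  "cont_parseval_frame \<mu> \<psi> \<longleftrightarrow>
     (\<forall>f g. integrable \<mu> (\<lambda>z. cinner f (\<psi> z) * cinner (\<psi> z) g) \<and>
            cinner f g = (\<integral>z. cinner f (\<psi> z) * cinner (\<psi> z) g \<partial>\<mu>))"

definition partially_localized ::
  "'g::topological_group_add measure \<Rightarrow> (nat \<Rightarrow> 'g set) \<Rightarrow> ('g \<Rightarrow> 'g \<Rightarrow> 'a::complex_hilbert \<Rightarrow> 'a)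
     \<Rightarrow> ('g \<Rightarrow> real) \<Rightarrow> bool" where
  "partially_localized \<mu> E L \<omega> \<longleftrightarrow>
     continuous_on UNIV \<omega> \<and> (\<forall>z. \<omega> z > 0) \<and> (\<forall>z w. \<omega> (z + w) \<le> \<omega> z * \<omega> w) \<and>
     (SUP z. ennreal (1 / \<omega> z) * (\<integral>\<^sup>+ w. ennreal (onorm (L z w) * \<omega> w) \<partial>\<mu>)) < \<infinity> \<and>
     (SUP w. ennreal (1 / \<omega> w) * (\<integral>\<^sup>+ z. ennreal (onorm (L z w) * \<omega> z) \<partial>\<mu>)) < \<infinity> \<and>
     ((\<lambda>N. SUP z. ennreal (1 / \<omega> z) *
         (\<integral>\<^sup>+ w \<in> - ((\<lambda>e. z + e) ` E N). ennreal (onorm (L z w) * \<omega> w) \<partial>\<mu>))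
        \<longlonglongrightarrow> 0) \<and>
     ((\<lambda>N. SUP w. ennreal (1 / \<omega> w) *
         (\<integral>\<^sup>+ z \<in> - ((\<lambda>e. w + e) ` E N). ennreal (onorm (L z w) * \<omega> z) \<partial>\<mu>))
        \<longlonglongrightarrow> 0)"

text \<open>Weakly compact; z \<rightarrow> \<infinity> means z eventually leaves every compact set.\<close>
definition weakly_compact ::
  "(nat \<Rightarrow> 'g::topological_group_add set) \<Rightarrow> ('g \<Rightarrow> 'g \<Rightarrow> 'a::complex_hilbert \<Rightarrow> 'a) \<Rightarrow> bool" where
  "weakly_compact E L \<longleftrightarrow>
     (\<forall>z w. compact_operator (L z w)) \<and>
     (\<forall>M\<ge>1. \<forall>\<epsilon>>0. \<exists>K. compact K \<and>
        (\<forall>z. z \<notin> K \<longrightarrow> (\<forall>w\<in>(\<lambda>e. z + e) ` E M. onorm (L z w) \<le> \<epsilon>)))"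

end

theory Submission
  imports Defs
begin


lemma cinner_scaleC_right: fixes x y :: "'a::complex_inner" shows "cinner x (c *\<^sub>C y) = cnj c * cinner x y"
  by (metis cinner_commute cinner_scaleC_left complex_cnj_cnj complex_cnj_mult)

lemma Im_cinner: fixes x y :: "'a::complex_inner" shows "Im (cinner x y) = inner x (\<i> *\<^sub>C y)"
proof -
  have "inner x (\<i> *\<^sub>C y) = Re (cinner x (\<i> *\<^sub>C y))" by (simp add: Re_cinner)
  also have "\<dots> = Re (- \<i> * cinner x y)" by (simp add: cinner_scaleC_right)
  also have "\<dots> = Im (cinner x y)" by simp
  finally show ?thesis by simp
qed

lemma cinner_eqI_inner:
  fixes a b :: "'a::complex_inner" and c d :: "'b::complex_inner"
  assumes "inner a b = inner c d" "inner a (\<i> *\<^sub>C b) = inner c (\<i> *\<^sub>C d)"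
  shows "cinner a b = cinner c d"
  using assms by (intro complex_eqI) (simp_all add: Re_cinner Im_cinner)

lemma scaleC_real: "complex_of_real r *\<^sub>C x = r *\<^sub>R x"
  by (simp add: scaleR_scaleC)

lemma scaleC_i_norm: fixes x :: "'a::complex_inner" shows "norm (\<i> *\<^sub>C x) = norm x"
proof -
  have "inner (\<i> *\<^sub>C x) (\<i> *\<^sub>C x) = Re (cinner (\<i> *\<^sub>C x) (\<i> *\<^sub>C x))" by (simp add: Re_cinner)
  also have "\<dots> = Re (cinner x x)" by (simp add: cinner_scaleC_left cinner_scaleC_right)
  also have "\<dots> = inner x x" by (simp add: Re_cinner)
  finally show ?thesis by (simp add: norm_eq_sqrt_inner)
qed

lemma scaleC_add_right': "c *\<^sub>C (x + y) = c *\<^sub>C x + c *\<^sub>C y" by (rule scaleC_add_right)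

lemma scaleC_real_linear: "bounded_linear (\<lambda>x::'a::complex_inner. \<i> *\<^sub>C x)"
proof
  show "\<i> *\<^sub>C (x + y) = \<i> *\<^sub>C x + \<i> *\<^sub>C y" for x y :: 'a by (rule scaleC_add_right)
  show "\<i> *\<^sub>C (r *\<^sub>R x) = r *\<^sub>R (\<i> *\<^sub>C x)" for r and x :: 'a
    by (simp add: scaleR_scaleC scaleC_scaleC mult.commute)
  show "\<exists>K. \<forall>x::'a. norm (\<i> *\<^sub>C x) \<le> norm x * K"
    by (rule exI[of _ 1]) (simp add: scaleC_i_norm)
qed

subsection \<open>Real Riesz representation\<close>

lemma parallelogram:
  fixes a b :: "'a::real_inner"
  shows "norm (a + b) ^ 2 + norm (a - b) ^ 2 = 2 * norm a ^ 2 + 2 * norm b ^ 2"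
  by (simp add: power2_norm_eq_inner inner_add_left inner_add_right inner_diff_left
      inner_diff_right inner_commute)

lemma riesz_real:
  fixes l :: "'a::{real_inner, complete_space} \<Rightarrow> real"
  assumes l: "bounded_linear l"
  shows "\<exists>y. \<forall>x. l x = inner x y"
proof (cases "\<forall>x. l x = 0")
  case True
  then show ?thesis by (intro exI[of _ 0]) simp
next
  case False
  interpret l: bounded_linear l by (rule l)
  from False obtain x1 where "l x1 \<noteq> 0" by blast
  define x0 where "x0 = (1 / l x1) *\<^sub>R x1"
  have lx0: "l x0 = 1" using \<open>l x1 \<noteq> 0\<close> by (simp add: x0_def l.scale)
  define N where "N = {x. l x = 0}"
  have N0: "0 \<in> N" by (simp add: N_def l.zero)
  have Nadd: "x \<in> N \<Longrightarrow> y \<in> N \<Longrightarrow> x + y \<in> N" for x y by (simp add: N_def l.add)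
  have Nscale: "x \<in> N \<Longrightarrow> r *\<^sub>R x \<in> N" for x r by (simp add: N_def l.scale)
  have Nclosed: "closed N"
    unfolding N_def using l.continuous_on[of UNIV "\<lambda>x. x"]
    by (intro closed_Collect_eq continuous_intros) (auto intro: l.continuous)
  define d where "d = infdist x0 N"
  have d_le: "d \<le> dist x0 m" if "m \<in> N" for m
    unfolding d_def using that by (rule infdist_le)
  have d_nonneg: "0 \<le> d" unfolding d_def by (rule infdist_nonneg)
  have "\<exists>m\<in>N. dist x0 m < d + 1 / Suc k" for k
  proof -
    have "infdist x0 N < d + 1 / Suc k" by (simp add: d_def)
    moreover have "infdist x0 N = (INF a\<in>N. dist x0 a)" using N0 by (intro infdist_notempty) auto
    ultimately have "(INF a\<in>N. dist x0 a) < d + 1 / Suc k" by simp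
    then show ?thesis
      using N0 by (subst (asm) cINF_less_iff) (auto intro: bdd_belowI[of _ 0])
  qed
  then obtain n where n: "\<And>k. n k \<in> N" "\<And>k. dist x0 (n k) < d + 1 / Suc k"
    by metis
  have mid: "2 * d \<le> norm ((x0 - n j) + (x0 - n k))" for j k
  proof -
    have "(1/2) *\<^sub>R (n j + n k) \<in> N" using n by (intro Nscale Nadd)
    then have "d \<le> dist x0 ((1/2) *\<^sub>R (n j + n k))" by (rule d_le)
    also have "\<dots> = norm ((1/2) *\<^sub>R ((x0 - n j) + (x0 - n k)))"
    proof -
      have "(1/2) *\<^sub>R ((x0 - n j) + (x0 - n k)) = (1/2) *\<^sub>R (x0 + x0) - (1/2) *\<^sub>R (n j + n k)"
        by (simp add: algebra_simps)
      then show ?thesis by (simp add: dist_norm)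
    qed
    also have "\<dots> = (1/2) * norm ((x0 - n j) + (x0 - n k))" by simp
    finally show ?thesis by simp
  qed
  have bound: "norm (n j - n k) ^ 2 \<le> 2 * (d + 1/Suc j)^2 + 2 * (d + 1/Suc k)^2 - 4 * d^2" for j k
  proof -
    have pj: "norm (x0 - n j) \<le> d + 1/Suc j" using n(2)[of j] by (simp add: dist_norm)
    have pk: "norm (x0 - n k) \<le> d + 1/Suc k" using n(2)[of k] by (simp add: dist_norm)
    have "norm (n j - n k) = norm ((x0 - n k) - (x0 - n j))" by (simp add: algebra_simps)
    also have "\<dots> = norm ((x0 - n j) - (x0 - n k))" by (simp add: norm_minus_commute)
    finally have e: "norm (n j - n k) = norm ((x0 - n j) - (x0 - n k))" .
    have par: "norm ((x0 - n j) + (x0 - n k)) ^ 2 + norm ((x0 - n j) - (x0 - n k)) ^ 2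
        = 2 * norm (x0 - n j) ^ 2 + 2 * norm (x0 - n k) ^ 2" by (rule parallelogram)
    have "(2*d)^2 \<le> norm ((x0 - n j) + (x0 - n k)) ^ 2"
      using mid[of j k] d_nonneg by (intro power_mono) auto
    moreover have "norm (x0 - n j) ^ 2 \<le> (d + 1/Suc j)^2" using pj by (intro power_mono) auto
    moreover have "norm (x0 - n k) ^ 2 \<le> (d + 1/Suc k)^2" using pk by (intro power_mono) auto
    ultimately show ?thesis using par e by (simp add: power_mult_distrib)
  qed
  have "Cauchy n"
  proof (rule metric_CauchyI)
    fix e :: real assume e: "e > 0"
    define c where "c = min 1 ((e/2)^2 / (4 * (2*d+1)))"
    have c12: "c > 0" "c \<le> 1" using e d_nonneg
      by (auto simp: c_def)
    have "c \<le> (e/2)^2 / (4 * (2*d+1))" by (simp add: c_def)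
    then have "c * (4 * (2*d+1)) \<le> (e/2)^2" using d_nonneg by (simp add: pos_le_divide_eq)
    then have c: "c > 0" "c \<le> 1" "4 * c * (2*d+1) \<le> (e/2)^2" using c12 by (auto simp: algebra_simps)
    obtain M :: nat where M: "1 / Suc M < c" using c(1)
      by (metis nat_approx_posE)
    have "dist (n j) (n k) < e" if "j \<ge> M" "k \<ge> M" for j k
    proof -
      have "1 / real (Suc j) \<le> 1 / real (Suc M)" using that by (intro divide_left_mono) auto
      then have ej: "1 / real (Suc j) < c" using M by linarith
      have "1 / real (Suc k) \<le> 1 / real (Suc M)" using that by (intro divide_left_mono) auto
      then have ek: "1 / real (Suc k) < c" using M by linarith
      have "2 * (d + 1/Suc j)^2 \<le> 2 * (d + c)^2"
        using ej d_nonneg by (intro mult_left_mono power_mono) auto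
      moreover have "2 * (d + 1/Suc k)^2 \<le> 2 * (d + c)^2"
        using ek d_nonneg by (intro mult_left_mono power_mono) auto
      moreover have "2 * (d + c)^2 + 2 * (d + c)^2 - 4 * d^2 = 4 * c * (2 * d + c)"
        by (simp add: power2_eq_square algebra_simps)
      moreover have "4 * c * (2 * d + c) \<le> 4 * c * (2*d+1)" using c by (intro mult_left_mono) auto
      ultimately have "norm (n j - n k) ^ 2 \<le> (e/2)^2" using bound[of j k] c(3) by linarith
      then have "norm (n j - n k) \<le> e/2" using e by (auto intro!: power2_le_imp_le[of _ "e/2"])
      then show ?thesis using e by (simp add: dist_norm)
    qed
    then show "\<exists>M. \<forall>m\<ge>M. \<forall>n'\<ge>M. dist (n m) (n n') < e" by blast
  qed
  then obtain n0 where n0: "n \<longlonglongrightarrow> n0" using Cauchy_convergent_iff convergent_def by blast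
  have n0N: "n0 \<in> N" using Nclosed n(1) n0 closed_sequentially by blast
  have "(\<lambda>k. dist x0 (n k)) \<longlonglongrightarrow> dist x0 n0" using n0 by (intro tendsto_intros)
  moreover have "(\<lambda>k. d + 1 / Suc k) \<longlonglongrightarrow> d + 0"
    by (intro tendsto_intros LIMSEQ_Suc[OF lim_inverse_n'])
  ultimately have "dist x0 n0 \<le> d + 0" using n(2) by (intro LIMSEQ_le) (auto intro: less_imp_le)
  then have best: "dist x0 n0 \<le> dist x0 m" if "m \<in> N" for m using d_le[OF that] by simp
  define u where "u = x0 - n0"
  have lu: "l u = 1" using n0N lx0 by (simp add: u_def N_def l.diff)
  have orth: "inner u m = 0" if m: "m \<in> N" for m
  proof (rule ccontr)
    assume c0: "inner u m \<noteq> 0"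
    define q where "q = norm m ^ 2"
    define t where "t = inner u m / (q + 1)"
    have q0: "q \<ge> 0" by (simp add: q_def)
    have "n0 + t *\<^sub>R m \<in> N" using n0N m by (intro Nadd Nscale)
    then have "dist x0 n0 \<le> dist x0 (n0 + t *\<^sub>R m)" by (rule best)
    then have "norm u \<le> norm (u - t *\<^sub>R m)" by (simp add: u_def dist_norm algebra_simps)
    then have "norm u ^ 2 \<le> norm (u - t *\<^sub>R m) ^ 2" by (intro power_mono) auto
    also have "norm (u - t *\<^sub>R m) ^ 2 = norm u ^ 2 - 2 * t * inner u m + t^2 * q"
      unfolding q_def power2_norm_eq_inner
      by (simp add: inner_diff_left inner_diff_right inner_commute power2_eq_square algebra_simps)
    finally have "2 * t * inner u m \<le> t^2 * q" by simp
    moreover have ceq: "inner u m = t * (q+1)" using q0 by (simp add: t_def)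
    ultimately have "2 * t * (t * (q+1)) \<le> t^2 * q" by simp
    then have "t^2 * (q + 2) \<le> 0" by (simp add: algebra_simps power2_eq_square)
    moreover have "t^2 * (q+2) \<ge> 0" using q0 by simp
    ultimately have "t^2 * (q+2) = 0" by linarith
    then have "t = 0" using q0 by simp
    then show False using c0 ceq by simp
  qed
  have u0: "u \<noteq> 0" using lu by auto
  have "l x = inner x ((1 / (norm u)^2) *\<^sub>R u)" for x
  proof -
    have "x - l x *\<^sub>R u \<in> N" by (simp add: N_def l.diff l.scale lu)
    then have "inner u (x - l x *\<^sub>R u) = 0" by (rule orth)
    then have "inner u x = l x * (norm u)^2" by (simp add: inner_diff_right power2_norm_eq_inner)
    then show ?thesis using u0 by (simp add: inner_commute field_simps)
  qed
  then show ?thesis by blast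
qed



lemma cinner_self: fixes x :: "'a::complex_inner" shows "cinner x x = complex_of_real ((norm x)^2)"
proof (rule complex_eqI)
  show "Re (cinner x x) = Re (complex_of_real ((norm x)\<^sup>2))"
    by (simp add: Re_cinner power2_norm_eq_inner)
  have "cinner x x = cnj (cinner x x)" by (rule cinner_commute)
  then have "Im (cinner x x) = Im (cnj (cinner x x))" by simp
  then have "Im (cinner x x) = - Im (cinner x x)" by simp
  then show "Im (cinner x x) = Im (complex_of_real ((norm x)\<^sup>2))" by simp
qed

locale tens =
  fixes ten :: "'a::complex_hilbert \<Rightarrow> 'b::complex_hilbert \<Rightarrow> 'h::complex_hilbert"
  assumes tensor: "hilbert_tensor ten"
begin

lemma ten_add1: "ten (a + a') b = ten a b + ten a' b"
  and ten_add2: "ten a (b + b') = ten a b + ten a b'"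
  and ten_scaleC1: "ten (c *\<^sub>C a) b = c *\<^sub>C ten a b"
  and ten_scaleC2: "ten a (c *\<^sub>C b) = c *\<^sub>C ten a b"
  and ten_cinner: "cinner (ten a b) (ten a' b') = cinner a a' * cinner b b'"
  and ten_dense: "closure (cspan (range (\<lambda>(a, b). ten a b))) = UNIV"
  using tensor unfolding hilbert_tensor_def by auto

lemma ten_scaleR1: "ten (r *\<^sub>R a) b = r *\<^sub>R ten a b"
  by (simp add: scaleR_scaleC ten_scaleC1)
lemma ten_scaleR2: "ten a (r *\<^sub>R b) = r *\<^sub>R ten a b"
  by (simp add: scaleR_scaleC ten_scaleC2)

lemma inner_ten: "inner (ten a b) (ten a' b') = Re (cinner a a' * cinner b b')"
  by (simp add: Re_cinner[symmetric] ten_cinner)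

lemma norm_ten: "norm (ten a b) = norm a * norm b"
proof -
  have "(norm (ten a b))^2 = Re (cinner a a * cinner b b)"
    by (simp add: power2_norm_eq_inner inner_ten)
  also have "\<dots> = (norm a * norm b)^2" by (simp add: cinner_self power_mult_distrib)
  finally show ?thesis by (simp add: power2_eq_iff_nonneg)
qed

lemma bl_ten1: "bounded_linear (\<lambda>a. ten a b)"
  by (rule bounded_linear_intro[of _ "norm b"]) (auto simp: ten_add1 ten_scaleR1 norm_ten)
lemma bl_ten2: "bounded_linear (\<lambda>b. ten a b)"
  by (rule bounded_linear_intro[of _ "norm a"]) (auto simp: ten_add2 ten_scaleR2 norm_ten mult.commute)

lemma inner_to_cinner:
  fixes x :: "'a"
  assumes "\<And>h. inner x h = inner F (ten h g)"
  shows "cinner x h = cinner F (ten h g)"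
proof (rule cinner_eqI_inner)
  show "inner x h = inner F (ten h g)" by (rule assms)
  have "inner x (\<i> *\<^sub>C h) = inner F (ten (\<i> *\<^sub>C h) g)" by (rule assms)
  also have "\<dots> = inner F (\<i> *\<^sub>C ten h g)" by (simp add: ten_scaleC1)
  finally show "inner x (\<i> *\<^sub>C h) = inner F (\<i> *\<^sub>C ten h g)" .
qed

lemma pinner_ex: "\<exists>x. \<forall>h. inner x h = inner F (ten h g)"
proof -
  have "bounded_linear (\<lambda>h. inner F (ten h g))"
    using bounded_linear_compose[OF bounded_linear_inner_right bl_ten1] by simp
  from riesz_real[OF this] obtain y where "\<And>h. inner F (ten h g) = inner h y" by blast
  then show ?thesis by (metis inner_commute)
qed

lemma inner_unique:
  fixes x x' :: "'c::real_inner"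
  assumes "\<And>h. inner x h = inner x' h" shows "x = x'"
proof -
  have "inner (x - x') (x - x') = 0" using assms by (simp add: inner_diff_left)
  then show ?thesis by simp
qed

lemma pinner_char: "inner (pinner ten F g) h = inner F (ten h g)"
  and pinner_cchar: "cinner (pinner ten F g) h = cinner F (ten h g)"
proof -
  obtain x where x: "\<And>h. inner x h = inner F (ten h g)" using pinner_ex by blast
  have xc: "\<And>h. cinner x h = cinner F (ten h g)" using x by (rule inner_to_cinner)
  have "pinner ten F g = x"
    unfolding pinner_def
  proof (rule the_equality)
    show "\<forall>h. cinner x h = cinner F (ten h g)" using xc by blast
    fix y assume "\<forall>h. cinner y h = cinner F (ten h g)"
    then have "\<And>h. inner y h = inner x h" using xc by (metis Re_cinner)
    then show "y = x" by (rule inner_unique)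
  qed
  then show "inner (pinner ten F g) h = inner F (ten h g)" "cinner (pinner ten F g) h = cinner F (ten h g)"
    using x xc by auto
qed

lemma pinner_eqI: "(\<And>h. inner x h = inner F (ten h g)) \<Longrightarrow> pinner ten F g = x"
  by (rule inner_unique) (simp add: pinner_char)

lemma norm_pinner: "norm (pinner ten F g) \<le> norm F * norm g"
proof -
  let ?x = "pinner ten F g"
  have "(norm ?x)^2 = inner F (ten ?x g)" by (simp add: power2_norm_eq_inner pinner_char)
  also have "\<dots> \<le> norm F * norm (ten ?x g)" by (rule Cauchy_Schwarz_ineq2[THEN order_trans[OF abs_ge_self]])
  also have "\<dots> = norm ?x * (norm F * norm g)" by (simp add: norm_ten)
  finally have "norm ?x * norm ?x \<le> norm ?x * (norm F * norm g)" by (simp add: power2_eq_square)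
  then show ?thesis by (cases "norm ?x = 0") (auto simp: mult_le_cancel_left_pos)
qed

lemma bb_pinner: "bounded_bilinear (pinner ten)"
proof (rule bounded_bilinear.intro)
  show "pinner ten (a + a') b = pinner ten a b + pinner ten a' b" for a a' b
    by (rule pinner_eqI) (simp add: inner_add_left pinner_char)
  show "pinner ten a (b + b') = pinner ten a b + pinner ten a b'" for a b b'
    by (rule pinner_eqI) (simp add: inner_add_left pinner_char ten_add2 inner_add_right)
  show "pinner ten (r *\<^sub>R a) b = r *\<^sub>R pinner ten a b" for r a b
    by (rule pinner_eqI) (simp add: pinner_char)
  show "pinner ten a (r *\<^sub>R b) = r *\<^sub>R pinner ten a b" for r a b
    by (rule pinner_eqI) (simp add: pinner_char ten_scaleR2)
  show "\<exists>K. \<forall>a b. norm (pinner ten a b) \<le> norm a * norm b * K"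
    by (rule exI[of _ 1]) (simp add: norm_pinner)
qed

lemma pinner_ten: "pinner ten (ten a b) g = cinner b g *\<^sub>C a"
proof (rule pinner_eqI)
  fix h
  have "inner (cinner b g *\<^sub>C a) h = Re (cinner b g * cinner a h)"
    by (simp add: Re_cinner[symmetric] cinner_scaleC_left)
  also have "\<dots> = inner (ten a b) (ten h g)" by (simp add: inner_ten mult.commute)
  finally show "inner (cinner b g *\<^sub>C a) h = inner (ten a b) (ten h g)" .
qed

end


lemma cinner_zero_left[simp]: fixes y :: "'a::complex_inner" shows "cinner 0 y = 0"
  using cinner_add_left[of "0::'a" 0 y] by simp

lemma cinner_sum_left: fixes f :: "'i \<Rightarrow> 'a::complex_inner"
  shows "cinner (\<Sum>i\<in>I. f i) y = (\<Sum>i\<in>I. cinner (f i) y)"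
  by (induction I rule: infinite_finite_induct) (auto simp: cinner_add_left)

lemma cinner_sum_right: fixes f :: "'i \<Rightarrow> 'a::complex_inner"
  shows "cinner y (\<Sum>i\<in>I. f i) = (\<Sum>i\<in>I. cinner y (f i))"
  by (subst cinner_commute) (simp add: cinner_sum_left cinner_commute[of "f _" y])

locale setting = tens ten for ten :: "'a::complex_hilbert \<Rightarrow> 'b::complex_hilbert \<Rightarrow> 'h::complex_hilbert" +
  fixes \<mu> :: "'g::{topological_space} measure" and \<psi> :: "'g \<Rightarrow> 'b"
  assumes frame: "cont_parseval_frame \<mu> \<psi>"
    and sets_mu: "sets \<mu> = sets borel"
    and psi_cont: "continuous_on UNIV \<psi>"
begin

definition W :: "'h \<Rightarrow> 'g \<Rightarrow> 'a" where "W F w = pinner ten F (\<psi> w)"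

lemma frame_int: "integrable \<mu> (\<lambda>z. cinner f (\<psi> z) * cinner (\<psi> z) g)"
  using frame unfolding cont_parseval_frame_def by blast

lemma frame_eq: "cinner f g = (\<integral>z. cinner f (\<psi> z) * cinner (\<psi> z) g \<partial>\<mu>)"
  using frame unfolding cont_parseval_frame_def by blast

lemma space_mu[simp]: "space \<mu> = UNIV"
  using sets_eq_imp_space_eq[OF sets_mu] by simp

lemma measurable_mu: "measurable \<mu> N = measurable borel N"
  by (rule measurable_cong_sets) (auto simp: sets_mu)

lemma W_cont: "continuous_on UNIV (W F)"
  unfolding W_def
  by (rule continuous_on_compose2[OF bounded_linear.continuous_on[OF bounded_bilinear.bounded_linear_right[OF bb_pinner] continuous_on_id] psi_cont]) auto

lemma W_meas[measurable]: "W F \<in> borel_measurable \<mu>"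
  unfolding measurable_mu by (rule borel_measurable_continuous_onI[OF W_cont])

lemma W_add: "W (F + G) w = W F w + W G w"
  and W_diff: "W (F - G) w = W F w - W G w"
  unfolding W_def by (simp_all add: bounded_bilinear.add_left[OF bb_pinner] bounded_bilinear.diff_left[OF bb_pinner])

lemma norm_W: "norm (W F w) \<le> norm F * norm (\<psi> w)"
  unfolding W_def by (rule norm_pinner)

lemma parseval_sum:
  assumes I: "finite I"
  shows "(\<integral>\<^sup>+w. ennreal ((norm (W (\<Sum>i\<in>I. ten (A i) (B i)) w))^2) \<partial>\<mu>)
     = ennreal ((norm (\<Sum>i\<in>I. ten (A i) (B i)))^2)"
proof -
  define F where "F = (\<Sum>i\<in>I. ten (A i) (B i))"
  define S where "S w = (\<Sum>j\<in>I. \<Sum>i\<in>I. cinner (A i) (A j) * (cinner (B i) (\<psi> w) * cinner (\<psi> w) (B j)))" for w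
  have WF: "W F w = (\<Sum>i\<in>I. cinner (B i) (\<psi> w) *\<^sub>C A i)" for w
    unfolding W_def F_def by (simp add: bounded_bilinear.sum_left[OF bb_pinner] pinner_ten)
  have nW: "(norm (W F w))^2 = Re (S w)" for w
  proof -
    have "complex_of_real ((norm (W F w))^2) = cinner (W F w) (W F w)" by (simp add: cinner_self)
    also have "\<dots> = S w"
      unfolding WF S_def cinner_sum_left cinner_sum_right
      by (intro sum.cong refl) (simp add: cinner_scaleC_left cinner_scaleC_right cinner_commute[of "\<psi> w"] ac_simps)
    finally show ?thesis by (metis Re_complex_of_real)
  qed
  have intij: "integrable \<mu> (\<lambda>w. cinner (A i) (A j) * (cinner (B i) (\<psi> w) * cinner (\<psi> w) (B j)))" for i j
    by (rule integrable_mult_right) (rule frame_int)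
  have intS: "integrable \<mu> S" unfolding S_def
    by (intro Bochner_Integration.integrable_sum intij)
  have "(\<integral>w. S w \<partial>\<mu>) = (\<Sum>j\<in>I. \<Sum>i\<in>I. (\<integral>w. cinner (A i) (A j) * (cinner (B i) (\<psi> w) * cinner (\<psi> w) (B j)) \<partial>\<mu>))"
    unfolding S_def
    by (simp add: Bochner_Integration.integral_sum intij Bochner_Integration.integrable_sum)
  also have "\<dots> = (\<Sum>j\<in>I. \<Sum>i\<in>I. cinner (A i) (A j) * cinner (B i) (B j))"
    by (intro sum.cong refl) (simp only: integral_mult_right_zero frame_eq[symmetric])
  also have "\<dots> = cinner F F"
    unfolding F_def cinner_sum_left cinner_sum_right by (simp add: ten_cinner)
  also have "\<dots> = complex_of_real ((norm F)^2)" by (simp add: cinner_self)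
  finally have iS: "(\<integral>w. S w \<partial>\<mu>) = complex_of_real ((norm F)^2)" .
  have "(\<integral>\<^sup>+w. ennreal ((norm (W F w))^2) \<partial>\<mu>) = (\<integral>\<^sup>+w. ennreal (Re (S w)) \<partial>\<mu>)"
    by (simp add: nW)
  also have "\<dots> = ennreal (\<integral>w. Re (S w) \<partial>\<mu>)"
  proof (rule nn_integral_eq_integral)
    show "integrable \<mu> (\<lambda>w. Re (S w))" using intS by (rule integrable_Re)
    show "AE x in \<mu>. 0 \<le> Re (S x)" by (intro AE_I2) (metis nW zero_le_power2)
  qed
  also have "(\<integral>w. Re (S w) \<partial>\<mu>) = (norm F)^2"
    using intS iS by (simp add: integral_Re)
  finally show ?thesis unfolding F_def .
qed


lemma span_repr:
  assumes "F \<in> cspan (range (\<lambda>(a, b). ten a b))"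
  shows "\<exists>(I::'h set) A B. finite I \<and> F = (\<Sum>i\<in>I. ten (A i) (B i))"
proof -
  from assms obtain S c where S: "finite S" "S \<subseteq> range (\<lambda>(a, b). ten a b)" "F = (\<Sum>s\<in>S. c s *\<^sub>C s)"
    unfolding cspan_def by blast
  define p where "p s = (SOME p. s = ten (fst p) (snd p))" for s
  have p: "s = ten (fst (p s)) (snd (p s))" if "s \<in> S" for s
  proof -
    from that S(2) obtain a b where "s = ten a b" by auto
    then have "\<exists>p. s = ten (fst p) (snd p)" by (intro exI[of _ "(a, b)"]) simp
    then show ?thesis unfolding p_def by (rule someI_ex)
  qed
  have "F = (\<Sum>s\<in>S. ten (c s *\<^sub>C fst (p s)) (snd (p s)))"
  proof -
    have "c s *\<^sub>C s = ten (c s *\<^sub>C fst (p s)) (snd (p s))" if "s \<in> S" for s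
    proof -
      from p[OF that] have "c s *\<^sub>C s = c s *\<^sub>C ten (fst (p s)) (snd (p s))" by (rule arg_cong)
      then show ?thesis by (simp add: ten_scaleC1)
    qed
    then show ?thesis unfolding S(3) by (intro sum.cong refl) 
  qed
  then have hS: "finite S \<and> F = (\<Sum>i\<in>S. ten ((\<lambda>s. c s *\<^sub>C fst (p s)) i) ((\<lambda>s. snd (p s)) i))"
    using S(1) by simp
  show ?thesis
    by (rule exI[where x=S], rule exI[where x="\<lambda>s. c s *\<^sub>C fst (p s)"], rule exI[where x="\<lambda>s. snd (p s)"])
       (rule hS)
qed

lemma parseval_span:
  assumes "F \<in> cspan (range (\<lambda>(a, b). ten a b))"
  shows "(\<integral>\<^sup>+w. ennreal ((norm (W F w))^2) \<partial>\<mu>) = ennreal ((norm F)^2)"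
proof -
  obtain I :: "'h set" and A B where "finite I" "F = (\<Sum>i\<in>I. ten (A i) (B i))" using span_repr[OF assms] by blast
  then show ?thesis using parseval_sum by simp
qed

lemma approx_seq: "\<exists>Fn. (\<forall>n. Fn n \<in> cspan (range (\<lambda>(a, b). ten a b))) \<and> Fn \<longlonglongrightarrow> F"
proof -
  have "F \<in> closure (cspan (range (\<lambda>(a, b). ten a b)))" using ten_dense by simp
  then show ?thesis unfolding closure_sequential by blast
qed

lemma W_tendsto: "Fn \<longlonglongrightarrow> F \<Longrightarrow> (\<lambda>n. W (Fn n) w) \<longlonglongrightarrow> W F w"
  unfolding W_def by (intro bounded_bilinear.tendsto[OF bb_pinner] tendsto_const)

lemma bessel: "(\<integral>\<^sup>+w. ennreal ((norm (W F w))^2) \<partial>\<mu>) \<le> ennreal ((norm F)^2)"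
proof -
  obtain Fn where Fn: "\<And>n. Fn n \<in> cspan (range (\<lambda>(a, b). ten a b))" "Fn \<longlonglongrightarrow> F"
    using approx_seq by blast
  have lim: "(\<lambda>n. ennreal ((norm (W (Fn n) w))^2)) \<longlonglongrightarrow> ennreal ((norm (W F w))^2)" for w
    by (intro tendsto_ennrealI tendsto_intros W_tendsto Fn(2))
  have "(\<integral>\<^sup>+w. ennreal ((norm (W F w))^2) \<partial>\<mu>) = (\<integral>\<^sup>+w. liminf (\<lambda>n. ennreal ((norm (W (Fn n) w))^2)) \<partial>\<mu>)"
    by (intro nn_integral_cong) (simp add: lim_imp_Liminf[OF _ lim])
  also have "\<dots> \<le> liminf (\<lambda>n. \<integral>\<^sup>+w. ennreal ((norm (W (Fn n) w))^2) \<partial>\<mu>)"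
    by (rule nn_integral_liminf) measurable
  also have "\<dots> = liminf (\<lambda>n. ennreal ((norm (Fn n))^2))"
    by (simp add: parseval_span[OF Fn(1)])
  also have "\<dots> = ennreal ((norm F)^2)"
    by (intro lim_imp_Liminf tendsto_ennrealI tendsto_intros Fn(2)) simp
  finally show ?thesis .
qed

lemma young_sq:
  fixes x y t :: real assumes t: "t > 0"
  shows "(x + y)^2 \<le> (1 + t) * x^2 + (1 + 1/t) * y^2"
proof -
  have "0 \<le> (t * x - y)^2 / t" using t by simp
  also have "(t * x - y)^2 / t = t * x^2 - 2 * x * y + y^2 / t"
    using t by (simp add: power2_eq_square field_simps)
  finally show ?thesis by (simp add: power2_eq_square algebra_simps)
qed

lemma parseval: "(\<integral>\<^sup>+w. ennreal ((norm (W F w))^2) \<partial>\<mu>) = ennreal ((norm F)^2)"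
proof (rule antisym[OF bessel])
  define I where "I = (\<integral>\<^sup>+w. ennreal ((norm (W F w))^2) \<partial>\<mu>)"
  have "I \<le> ennreal ((norm F)^2)" unfolding I_def by (rule bessel)
  then obtain r where r: "I = ennreal r" "r \<ge> 0" by (cases I) (auto simp: top_unique)
  obtain Fn where Fn: "\<And>n. Fn n \<in> cspan (range (\<lambda>(a, b). ten a b))" "Fn \<longlonglongrightarrow> F"
    using approx_seq by blast
  have step: "(norm (Fn n))^2 \<le> (1 + t) * r + (1 + 1/t) * (norm (Fn n - F))^2" if t: "t > 0" for t n
  proof -
    have "ennreal ((norm (Fn n))^2) = (\<integral>\<^sup>+w. ennreal ((norm (W (Fn n) w))^2) \<partial>\<mu>)"
      by (simp add: parseval_span[OF Fn(1)])
    also have "\<dots> \<le> (\<integral>\<^sup>+w. ennreal (1 + t) * ennreal ((norm (W F w))^2) + ennreal (1 + 1/t) * ennreal ((norm (W (Fn n - F) w))^2) \<partial>\<mu>)"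
    proof (intro nn_integral_mono)
      fix w
      have e: "W (Fn n) w = W F w + W (Fn n - F) w" by (simp add: W_diff)
      have "(norm (W (Fn n) w))^2 \<le> (norm (W F w) + norm (W (Fn n - F) w))^2"
        unfolding e by (intro power_mono norm_triangle_ineq) auto
      also have "\<dots> \<le> (1 + t) * (norm (W F w))^2 + (1 + 1/t) * (norm (W (Fn n - F) w))^2"
        by (rule young_sq[OF t])
      finally show "ennreal ((norm (W (Fn n) w))^2) \<le> ennreal (1 + t) * ennreal ((norm (W F w))^2) + ennreal (1 + 1/t) * ennreal ((norm (W (Fn n - F) w))^2)"
        using t by (simp add: ennreal_mult[symmetric] ennreal_plus[symmetric] del: ennreal_plus)
    qed
    also have "\<dots> = ennreal (1 + t) * I + ennreal (1 + 1/t) * (\<integral>\<^sup>+w. ennreal ((norm (W (Fn n - F) w))^2) \<partial>\<mu>)"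
    proof -
      have m1: "(\<lambda>w. ennreal (1 + t) * ennreal ((norm (W F w))^2)) \<in> borel_measurable \<mu>" by measurable
      have m2: "(\<lambda>w. ennreal (1 + 1/t) * ennreal ((norm (W (Fn n - F) w))^2)) \<in> borel_measurable \<mu>" by measurable
      have m3: "(\<lambda>w. ennreal ((norm (W F w))^2)) \<in> borel_measurable \<mu>" by measurable
      have m4: "(\<lambda>w. ennreal ((norm (W (Fn n - F) w))^2)) \<in> borel_measurable \<mu>" by measurable
      show ?thesis unfolding I_def nn_integral_add[OF m1 m2] nn_integral_cmult[OF m3] nn_integral_cmult[OF m4] ..
    qed
    also have "\<dots> \<le> ennreal (1 + t) * I + ennreal (1 + 1/t) * ennreal ((norm (Fn n - F))^2)"
      by (intro add_mono mult_left_mono bessel) auto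
    also have "\<dots> = ennreal ((1 + t) * r + (1 + 1/t) * (norm (Fn n - F))^2)"
    proof -
      have "ennreal ((1 + t) * r + (1 + 1/t) * (norm (Fn n - F))^2) = ennreal ((1 + t) * r) + ennreal ((1 + 1/t) * (norm (Fn n - F))^2)"
        using t r by (intro ennreal_plus) auto
      also have "ennreal ((1 + t) * r) = ennreal (1 + t) * ennreal r" using t r by (intro ennreal_mult) auto
      also have "ennreal ((1 + 1/t) * (norm (Fn n - F))^2) = ennreal (1 + 1/t) * ennreal ((norm (Fn n - F))^2)"
        using t by (intro ennreal_mult) auto
      finally show ?thesis using r by simp
    qed
    finally have "ennreal ((norm (Fn n))^2) \<le> ennreal ((1 + t) * r + (1 + 1/t) * (norm (Fn n - F))^2)" .
    moreover have "0 \<le> (1 + t) * r + (1 + 1/t) * (norm (Fn n - F))^2" using t r by auto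
    ultimately show ?thesis by (simp add: ennreal_le_iff)
  qed
  have bnd: "(norm F)^2 \<le> (1 + t) * r" if t: "t > 0" for t
  proof (rule LIMSEQ_le)
    show "(\<lambda>n. (norm (Fn n))^2) \<longlonglongrightarrow> (norm F)^2" by (intro tendsto_intros Fn(2))
    have "(\<lambda>n. Fn n - F) \<longlonglongrightarrow> F - F" by (intro tendsto_intros Fn(2))
    then have "(\<lambda>n. (1 + t) * r + (1 + 1/t) * (norm (Fn n - F))^2) \<longlonglongrightarrow> (1 + t) * r + (1 + 1/t) * (norm (F - F))^2"
      by (intro tendsto_intros Fn(2))
    then show "(\<lambda>n. (1 + t) * r + (1 + 1/t) * (norm (Fn n - F))^2) \<longlonglongrightarrow> (1 + t) * r" by simp
    show "\<exists>N. \<forall>n\<ge>N. (norm (Fn n))^2 \<le> (1 + t) * r + (1 + 1/t) * (norm (Fn n - F))^2"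
      using step[OF t] by blast
  qed
  have "(norm F)^2 \<le> r"
  proof (rule field_le_epsilon)
    fix e :: real assume e: "e > 0"
    have "(norm F)^2 \<le> (1 + e / (r + 1)) * r" using e r by (intro bnd) auto
    also have "\<dots> = r + e * (r / (r + 1))" using r by (simp add: field_simps)
    also have "r / (r + 1) \<le> 1" using r by simp
    then have "e * (r / (r + 1)) \<le> e * 1" using e by (intro mult_left_mono) auto
    then have "r + e * (r / (r + 1)) \<le> r + e" by simp
    finally show "(norm F)^2 \<le> r + e" .
  qed
  then show "ennreal ((norm F)^2) \<le> I" using r by simp
qed

lemma polar_bound:
  "ennreal (inner F1 F2) \<le> (\<integral>\<^sup>+w. ennreal (norm (W F1 w) * norm (W F2 w)) \<partial>\<mu>)"
proof -
  define J where "J = (\<integral>\<^sup>+w. ennreal (norm (W F1 w) * norm (W F2 w)) \<partial>\<mu>)"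
  have "ennreal ((norm (F1 + F2))^2) = (\<integral>\<^sup>+w. ennreal ((norm (W (F1 + F2) w))^2) \<partial>\<mu>)"
    by (rule parseval[symmetric])
  also have "\<dots> = (\<integral>\<^sup>+w. ennreal ((norm (W F1 w + W F2 w))^2) \<partial>\<mu>)"
    by (simp only: W_add)
  also have "\<dots> \<le> (\<integral>\<^sup>+w. ennreal ((norm (W F1 w - W F2 w))^2) + 4 * ennreal (norm (W F1 w) * norm (W F2 w)) \<partial>\<mu>)"
  proof (intro nn_integral_mono)
    fix w
    let ?a = "W F1 w" and ?b = "W F2 w"
    have "(norm (?a + ?b))^2 - (norm (?a - ?b))^2 = 4 * inner ?a ?b"
      by (simp add: power2_norm_eq_inner inner_add_left inner_add_right inner_diff_left inner_diff_right inner_commute)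
    moreover have "inner ?a ?b \<le> norm ?a * norm ?b" by (rule norm_cauchy_schwarz)
    ultimately have "(norm (?a + ?b))^2 \<le> (norm (?a - ?b))^2 + 4 * (norm ?a * norm ?b)" by linarith
    then have "ennreal ((norm (?a + ?b))^2) \<le> ennreal ((norm (?a - ?b))^2 + 4 * (norm ?a * norm ?b))"
      by (rule ennreal_leI)
    also have "\<dots> = ennreal ((norm (?a - ?b))^2) + ennreal (4 * (norm ?a * norm ?b))"
      by (rule ennreal_plus) auto
    also have "ennreal (4 * (norm ?a * norm ?b)) = 4 * ennreal (norm ?a * norm ?b)"
      by (subst ennreal_mult) auto
    finally show "ennreal ((norm (?a + ?b))^2) \<le> ennreal ((norm (?a - ?b))^2) + 4 * ennreal (norm ?a * norm ?b)" .
  qed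
  also have "\<dots> = ennreal ((norm (F1 - F2))^2) + 4 * J"
  proof -
    have m1: "(\<lambda>w. ennreal ((norm (W F1 w - W F2 w))^2)) \<in> borel_measurable \<mu>"
      by (simp only: W_diff[symmetric]) measurable
    have m2: "(\<lambda>w. 4 * ennreal (norm (W F1 w) * norm (W F2 w))) \<in> borel_measurable \<mu>" by measurable
    have m3: "(\<lambda>w. ennreal (norm (W F1 w) * norm (W F2 w))) \<in> borel_measurable \<mu>" by measurable
    have "(\<integral>\<^sup>+w. ennreal ((norm (W F1 w - W F2 w))^2) \<partial>\<mu>) = (\<integral>\<^sup>+w. ennreal ((norm (W (F1 - F2) w))^2) \<partial>\<mu>)"
      by (simp only: W_diff)
    also have "\<dots> = ennreal ((norm (F1 - F2))^2)" by (rule parseval)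
    finally show ?thesis unfolding J_def nn_integral_add[OF m1 m2] nn_integral_cmult[OF m3] by simp
  qed
  finally have main: "ennreal ((norm (F1 + F2))^2) \<le> ennreal ((norm (F1 - F2))^2) + 4 * J" .
  show ?thesis
  proof (cases "J = \<infinity>")
    case True then show ?thesis by (simp add: J_def[symmetric])
  next
    case False
    then obtain j where j: "J = ennreal j" "j \<ge> 0" by (cases J) auto
    have "ennreal ((norm (F1 - F2))^2 + 4 * j) = ennreal ((norm (F1 - F2))^2) + ennreal (4 * j)"
      using j by (intro ennreal_plus) auto
    also have "ennreal (4 * j) = 4 * ennreal j" using j by (subst ennreal_mult) auto
    finally have "ennreal ((norm (F1 + F2))^2) \<le> ennreal ((norm (F1 - F2))^2 + 4 * j)"
      using main j by simp
    then have "(norm (F1 + F2))^2 \<le> (norm (F1 - F2))^2 + 4 * j"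
      using j by (subst (asm) ennreal_le_iff) auto
    moreover have "(norm (F1 + F2))^2 - (norm (F1 - F2))^2 = 4 * inner F1 F2"
      by (simp add: power2_norm_eq_inner inner_add_left inner_add_right inner_diff_left inner_diff_right inner_commute)
    ultimately have "inner F1 F2 \<le> j" by linarith
    then show ?thesis using j by (simp add: J_def[symmetric])
  qed
qed

end


lemma cs_weighted:
  fixes M :: "'g measure" and k :: "'g \<Rightarrow> ennreal" and h :: "'g \<Rightarrow> real" and \<phi> :: "'g \<Rightarrow> ennreal"
  assumes [measurable]: "k \<in> borel_measurable M" "h \<in> borel_measurable M" "\<phi> \<in> borel_measurable M"
    and hpos: "\<And>w. h w > 0"
  shows "(\<integral>\<^sup>+w. k w * \<phi> w \<partial>M)^2 \<le> (\<integral>\<^sup>+w. k w * ennreal (h w) \<partial>M) * (\<integral>\<^sup>+w. k w * (\<phi> w ^ 2 * ennreal (1 / h w)) \<partial>M)"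
proof -
  define f where "f w = ennreal (sqrt (h w))" for w
  define g where "g w = \<phi> w * ennreal (1 / sqrt (h w))" for w
  have [measurable]: "f \<in> borel_measurable M" "g \<in> borel_measurable M" unfolding f_def g_def by measurable
  have fg: "f w * g w = \<phi> w" for w
  proof -
    have "f w * g w = \<phi> w * (ennreal (sqrt (h w)) * ennreal (1 / sqrt (h w)))" by (simp add: f_def g_def ac_simps)
    also have "ennreal (sqrt (h w)) * ennreal (1 / sqrt (h w)) = ennreal (sqrt (h w) * (1 / sqrt (h w)))"
      using hpos[of w] by (intro ennreal_mult[symmetric]) auto
    also have "sqrt (h w) * (1 / sqrt (h w)) = 1" using hpos[of w] by simp
    finally show ?thesis by simp
  qed
  have f2: "f w ^ 2 = ennreal (h w)" for w
    unfolding f_def using hpos[of w] by (subst ennreal_power) auto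
  have g2: "g w ^ 2 = \<phi> w ^ 2 * ennreal (1 / h w)" for w
  proof -
    have "g w ^ 2 = \<phi> w ^ 2 * ennreal (1 / sqrt (h w)) ^ 2" by (simp add: g_def power_mult_distrib)
    also have "ennreal (1 / sqrt (h w)) ^ 2 = ennreal ((1 / sqrt (h w)) ^ 2)"
      using hpos[of w] by (intro ennreal_power) auto
    also have "(1 / sqrt (h w)) ^ 2 = 1 / h w" using hpos[of w] by (simp add: power_divide)
    finally show ?thesis .
  qed
  let ?N = "density M k"
  have "(\<integral>\<^sup>+w. k w * \<phi> w \<partial>M) = (\<integral>\<^sup>+w. f w * g w \<partial>?N)"
    by (simp add: fg nn_integral_density)
  also have "(\<dots>)^2 \<le> (\<integral>\<^sup>+w. f w ^ 2 \<partial>?N) * (\<integral>\<^sup>+w. g w ^ 2 \<partial>?N)"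
    by (rule Cauchy_Schwarz_nn_integral) measurable
  also have "\<dots> = (\<integral>\<^sup>+w. k w * ennreal (h w) \<partial>M) * (\<integral>\<^sup>+w. k w * (\<phi> w ^ 2 * ennreal (1 / h w)) \<partial>M)"
    by (simp add: f2 g2 nn_integral_density)
  finally show ?thesis .
qed

lemma schur:
  fixes M :: "'g measure" and K :: "'g \<times> 'g \<Rightarrow> ennreal" and h :: "'g \<Rightarrow> real" and \<phi> :: "'g \<Rightarrow> ennreal"
  assumes sf: "sigma_finite_measure M" and sp: "space M = UNIV"
    and [measurable]: "K \<in> borel_measurable (M \<Otimes>\<^sub>M M)" "h \<in> borel_measurable M" "\<phi> \<in> borel_measurable M"
    and hpos: "\<And>w. h w > 0"
    and A: "\<And>z. (\<integral>\<^sup>+w. K (w, z) * ennreal (h w) \<partial>M) \<le> a * ennreal (h z)"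
    and B: "\<And>w. (\<integral>\<^sup>+z. K (w, z) * ennreal (h z) \<partial>M) \<le> b * ennreal (h w)"
  shows "(\<integral>\<^sup>+z. (\<integral>\<^sup>+w. K (w, z) * \<phi> w \<partial>M)^2 \<partial>M) \<le> a * b * (\<integral>\<^sup>+w. \<phi> w ^ 2 \<partial>M)"
proof -
  interpret pair_sigma_finite M M using sf by (simp add: pair_sigma_finite_def)
  have Km[measurable]: "(\<lambda>w. K (w, z)) \<in> borel_measurable M" for z
    using measurable_compose[OF measurable_Pair2'[of z M M] \<open>K \<in> borel_measurable (M \<Otimes>\<^sub>M M)\<close>] sp by simp
  have "(\<integral>\<^sup>+z. (\<integral>\<^sup>+w. K (w, z) * \<phi> w \<partial>M)^2 \<partial>M)
      \<le> (\<integral>\<^sup>+z. a * ennreal (h z) * (\<integral>\<^sup>+w. K (w, z) * (\<phi> w ^ 2 * ennreal (1 / h w)) \<partial>M) \<partial>M)"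
  proof (rule nn_integral_mono)
    fix z
    have "(\<integral>\<^sup>+w. K (w, z) * \<phi> w \<partial>M)^2 \<le> (\<integral>\<^sup>+w. K (w, z) * ennreal (h w) \<partial>M) * (\<integral>\<^sup>+w. K (w, z) * (\<phi> w ^ 2 * ennreal (1 / h w)) \<partial>M)"
      by (rule cs_weighted) (auto simp: hpos)
    also have "\<dots> \<le> a * ennreal (h z) * (\<integral>\<^sup>+w. K (w, z) * (\<phi> w ^ 2 * ennreal (1 / h w)) \<partial>M)"
      by (intro mult_right_mono A) auto
    finally show "(\<integral>\<^sup>+w. K (w, z) * \<phi> w \<partial>M)^2 \<le> a * ennreal (h z) * (\<integral>\<^sup>+w. K (w, z) * (\<phi> w ^ 2 * ennreal (1 / h w)) \<partial>M)" .
  qed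
  also have "\<dots> = a * (\<integral>\<^sup>+z. (\<integral>\<^sup>+w. K (w, z) * ennreal (h z) * (\<phi> w ^ 2 * ennreal (1 / h w)) \<partial>M) \<partial>M)"
  proof -
    have "(\<integral>\<^sup>+z. a * ennreal (h z) * (\<integral>\<^sup>+w. K (w, z) * (\<phi> w ^ 2 * ennreal (1 / h w)) \<partial>M) \<partial>M)
       = (\<integral>\<^sup>+z. a * (\<integral>\<^sup>+w. K (w, z) * ennreal (h z) * (\<phi> w ^ 2 * ennreal (1 / h w)) \<partial>M) \<partial>M)"
    proof (intro nn_integral_cong)
      fix z
      have "ennreal (h z) * (\<integral>\<^sup>+w. K (w, z) * (\<phi> w ^ 2 * ennreal (1 / h w)) \<partial>M)
          = (\<integral>\<^sup>+w. ennreal (h z) * (K (w, z) * (\<phi> w ^ 2 * ennreal (1 / h w))) \<partial>M)"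
        by (rule nn_integral_cmult[symmetric]) measurable
      then show "a * ennreal (h z) * (\<integral>\<^sup>+w. K (w, z) * (\<phi> w ^ 2 * ennreal (1 / h w)) \<partial>M)
          = a * (\<integral>\<^sup>+w. K (w, z) * ennreal (h z) * (\<phi> w ^ 2 * ennreal (1 / h w)) \<partial>M)"
        by (simp add: ac_simps)
    qed
    also have "\<dots> = a * (\<integral>\<^sup>+z. (\<integral>\<^sup>+w. K (w, z) * ennreal (h z) * (\<phi> w ^ 2 * ennreal (1 / h w)) \<partial>M) \<partial>M)"
      by (rule nn_integral_cmult) measurable
    finally show ?thesis .
  qed
  also have "(\<integral>\<^sup>+z. (\<integral>\<^sup>+w. K (w, z) * ennreal (h z) * (\<phi> w ^ 2 * ennreal (1 / h w)) \<partial>M) \<partial>M)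
      = (\<integral>\<^sup>+w. (\<integral>\<^sup>+z. K (w, z) * ennreal (h z) * (\<phi> w ^ 2 * ennreal (1 / h w)) \<partial>M) \<partial>M)"
    by (rule Fubini[where f = "\<lambda>p. K p * ennreal (h (snd p)) * (\<phi> (fst p) ^ 2 * ennreal (1 / h (fst p)))", simplified]) measurable
  also have "\<dots> = (\<integral>\<^sup>+w. (\<integral>\<^sup>+z. K (w, z) * ennreal (h z) \<partial>M) * (\<phi> w ^ 2 * ennreal (1 / h w)) \<partial>M)"
    by (intro nn_integral_cong nn_integral_multc) measurable
  also have "\<dots> \<le> (\<integral>\<^sup>+w. b * ennreal (h w) * (\<phi> w ^ 2 * ennreal (1 / h w)) \<partial>M)"
    by (intro nn_integral_mono mult_right_mono B) auto
  also have "\<dots> = (\<integral>\<^sup>+w. b * \<phi> w ^ 2 \<partial>M)"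
  proof (intro nn_integral_cong)
    fix w
    have "ennreal (h w) * ennreal (1 / h w) = ennreal (h w * (1 / h w))"
      using hpos[of w] by (intro ennreal_mult[symmetric]) auto
    also have "\<dots> = 1" using hpos[of w] by simp
    finally have "ennreal (h w) * ennreal (1 / h w) = 1" .
    then show "b * ennreal (h w) * (\<phi> w ^ 2 * ennreal (1 / h w)) = b * \<phi> w ^ 2"
      by (metis (no_types, lifting) mult.assoc mult.commute mult.left_commute mult_1)
  qed
  also have "\<dots> = b * (\<integral>\<^sup>+w. \<phi> w ^ 2 \<partial>M)" by (rule nn_integral_cmult) measurable
  finally show ?thesis by (simp add: ac_simps mult_right_mono)
qed



lemma onorm_SUP_dense:
  fixes f :: "'a::real_normed_vector \<Rightarrow> 'c::real_normed_vector"
  assumes f: "bounded_linear f"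
    and D: "\<And>X. open X \<Longrightarrow> X \<noteq> {} \<Longrightarrow> \<exists>d\<in>D. d \<in> X"
  shows "ennreal (onorm f) = (SUP d\<in>D. ennreal (norm (f d) / norm d))"
proof (rule antisym)
  interpret f: bounded_linear f by (rule f)
  define S where "S = (SUP d\<in>D. ennreal (norm (f d) / norm d))"
  have le: "norm (f d) / norm d \<le> onorm f" for d
  proof (cases "d = 0")
    case False
    then show ?thesis using onorm[OF f, of d] by (simp add: divide_le_eq mult.commute)
  qed (simp add: onorm_pos_le[OF f])
  show "S \<le> ennreal (onorm f)" unfolding S_def
    by (intro SUP_least ennreal_leI le)
  show "ennreal (onorm f) \<le> S"
  proof (cases "S = \<infinity>")
    case False
    then obtain s where s: "S = ennreal s" "s \<ge> 0" by (cases S) auto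
    have sd: "norm (f d) / norm d \<le> s" if "d \<in> D" for d
    proof -
      have "ennreal (norm (f d) / norm d) \<le> ennreal s" using that s unfolding S_def
        by (metis SUP_upper)
      then show ?thesis using s by (simp add: ennreal_le_iff)
    qed
    have "norm (f x) \<le> s * norm x" for x
    proof (cases "x = 0")
      case False
      have "norm (f x) / norm x \<le> s"
      proof (rule field_le_epsilon)
        fix e :: real assume e: "e > 0"
        define g where "g y = norm (f y) / norm y" for y
        have gc: "continuous_on (- {0}) g" unfolding g_def
          by (intro continuous_intros f.continuous_on) auto
        have "open ((- {0}) \<inter> g -` {g x - e <..})"
        proof -
          have "open (g -` {g x - e <..} \<inter> - {0})"
            using gc continuous_on_open_vimage[of "- {0}" g] by (simp add: open_Compl)
          then show ?thesis by (simp add: Int_commute)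
        qed
        moreover have "x \<in> (- {0}) \<inter> g -` {g x - e <..}" using False e by auto
        ultimately obtain d where d: "d \<in> D" "d \<in> (- {0}) \<inter> g -` {g x - e <..}"
          using D by blast
        then have "g x - e < g d" by auto
        also have "g d \<le> s" using sd[OF d(1)] by (simp add: g_def)
        finally show "norm (f x) / norm x \<le> s + e" by (simp add: g_def)
      qed
      then show ?thesis using False by (simp add: divide_le_eq)
    qed simp
    then have "onorm f \<le> s" using s(2) by (intro onorm_bound) auto
    then show ?thesis using s by simp
  qed simp
qed


context setting
begin

lemma Tloc_bl: "bounded_linear T \<Longrightarrow> bounded_linear (Tloc ten \<psi> T w z)"
  unfolding Tloc_def
  using bounded_linear_compose[OF bounded_bilinear.bounded_linear_left[OF bb_pinner]
      bounded_linear_compose[of T, OF _ bl_ten1]] by blast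

lemma pointwise:
  assumes T: "bounded_linear T"
    and meas: "(\<lambda>w. ennreal (onorm (Tloc ten \<psi> T w z))) \<in> borel_measurable \<mu>"
  shows "ennreal (norm (W (T f) z)) \<le> (\<integral>\<^sup>+w. ennreal (onorm (Tloc ten \<psi> T w z)) * ennreal (norm (W f w)) \<partial>\<mu>)"
proof -
  interpret T: bounded_linear T by (rule T)
  define x where "x = W (T f) z"
  define J where "J = (\<integral>\<^sup>+w. ennreal (onorm (Tloc ten \<psi> T w z)) * ennreal (norm (W f w)) \<partial>\<mu>)"
  define G where "G = ten x (\<psi> z)"
  have "bounded_linear (\<lambda>v. inner (T v) G)"
    using bounded_linear_compose[OF bounded_linear_inner_left T] by simp
  from riesz_real[OF this] obtain y where y: "\<And>v. inner (T v) G = inner v y" by blast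
  have "(norm x)^2 = inner x x" by (simp add: power2_norm_eq_inner)
  also have "\<dots> = inner (T f) G" unfolding G_def by (simp add: x_def W_def pinner_char)
  also have "\<dots> = inner f y" by (rule y)
  finally have xy: "(norm x)^2 = inner f y" .
  have Wy: "norm (W y w) \<le> onorm (Tloc ten \<psi> T w z) * norm x" for w
  proof -
    define v where "v = W y w"
    let ?L = "Tloc ten \<psi> T w z"
    have "(norm v)^2 = inner v v" by (simp add: power2_norm_eq_inner)
    also have "\<dots> = inner y (ten v (\<psi> w))" by (simp add: v_def W_def pinner_char)
    also have "\<dots> = inner (ten v (\<psi> w)) y" by (rule inner_commute)
    also have "\<dots> = inner (T (ten v (\<psi> w))) G" by (rule y[symmetric])
    also have "\<dots> = inner (?L v) x" by (simp add: G_def Tloc_def pinner_char)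
    also have "\<dots> \<le> norm (?L v) * norm x" by (rule norm_cauchy_schwarz)
    also have "\<dots> \<le> (onorm ?L * norm v) * norm x"
      by (intro mult_right_mono onorm[OF Tloc_bl[OF T]]) auto
    finally have "norm v * norm v \<le> norm v * (onorm ?L * norm x)" by (simp add: power2_eq_square ac_simps)
    then show ?thesis unfolding v_def[symmetric]
      by (cases "norm v = 0") (auto simp: mult_le_cancel_left_pos onorm_pos_le[OF Tloc_bl[OF T]])
  qed
  have "ennreal ((norm x)^2) \<le> (\<integral>\<^sup>+w. ennreal (norm (W f w) * norm (W y w)) \<partial>\<mu>)"
    unfolding xy by (rule polar_bound)
  also have "\<dots> \<le> (\<integral>\<^sup>+w. ennreal (norm x) * (ennreal (onorm (Tloc ten \<psi> T w z)) * ennreal (norm (W f w))) \<partial>\<mu>)"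
  proof (intro nn_integral_mono)
    fix w
    have "norm (W f w) * norm (W y w) \<le> norm (W f w) * (onorm (Tloc ten \<psi> T w z) * norm x)"
      by (intro mult_left_mono Wy) auto
    then have "ennreal (norm (W f w) * norm (W y w)) \<le> ennreal (norm x * (onorm (Tloc ten \<psi> T w z) * norm (W f w)))"
      by (intro ennreal_leI) (simp add: ac_simps)
    also have "\<dots> = ennreal (norm x) * (ennreal (onorm (Tloc ten \<psi> T w z)) * ennreal (norm (W f w)))"
      by (simp add: ennreal_mult onorm_pos_le[OF Tloc_bl[OF T]])
    finally show "ennreal (norm (W f w) * norm (W y w)) \<le> ennreal (norm x) * (ennreal (onorm (Tloc ten \<psi> T w z)) * ennreal (norm (W f w)))" .
  qed
  also have "\<dots> = ennreal (norm x) * J"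
    unfolding J_def by (rule nn_integral_cmult) (use meas in measurable)
  finally have main: "ennreal ((norm x)^2) \<le> ennreal (norm x) * J" .
  show ?thesis
  proof (cases "J = \<infinity>")
    case True then show ?thesis by (simp add: J_def[symmetric])
  next
    case False
    then obtain j where j: "J = ennreal j" "j \<ge> 0" by (cases J) auto
    have "ennreal ((norm x)^2) \<le> ennreal (norm x * j)" using main j by (simp add: ennreal_mult)
    then have "(norm x)^2 \<le> norm x * j" using j by (subst (asm) ennreal_le_iff) auto
    then have "norm x \<le> j" by (cases "norm x = 0") (auto simp: power2_eq_square j(2) mult_le_cancel_left_pos)
    then show ?thesis using j by (simp add: J_def[symmetric] x_def)
  qed
qed

end



lemma sup_unpack:
  fixes I C :: ennreal
  assumes r: "0 < r" and le: "ennreal (1 / r) * I \<le> C"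
  shows "I \<le> C * ennreal r"
proof -
  have "ennreal r * ennreal (1 / r) = ennreal (r * (1 / r))" using r by (intro ennreal_mult[symmetric]) auto
  also have "\<dots> = 1" using r by simp
  finally have one: "ennreal r * ennreal (1 / r) = 1" .
  have "I = ennreal r * (ennreal (1 / r) * I)" by (simp add: mult.assoc[symmetric] one)
  also have "\<dots> \<le> ennreal r * C" by (intro mult_left_mono le) auto
  finally show ?thesis by (simp add: mult.commute)
qed

lemma sq_sum_ennreal:
  fixes a b :: ennreal
  shows "(a + b)^2 \<le> 2 * a^2 + 2 * b^2"
proof -
  have "(a + b)^2 = a^2 + 2 * a * b + b^2" by (simp add: power2_eq_square algebra_simps mult_2_right)
  also have "\<dots> \<le> a^2 + (a^2 + b^2) + b^2" by (intro add_mono sum_of_squares_ge_ennreal) auto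
  also have "\<dots> = 2 * a^2 + 2 * b^2" by (simp add: mult_2 algebra_simps)
  finally show ?thesis .
qed

lemma E_mono_gen:
  fixes E :: "nat \<Rightarrow> 'a set" and m n :: nat
  assumes mono: "\<And>N. N \<ge> 1 \<Longrightarrow> E N \<subseteq> E (N + 1)" and "1 \<le> m" "m \<le> n"
  shows "E m \<subseteq> E n"
  using assms(3)
proof (induction n rule: dec_induct)
  case (step k)
  then show ?case using mono[of k] assms(2) by auto
qed simp

lemma mem_translate:
  fixes w z :: "'g::group_add"
  shows "z \<in> (\<lambda>e. w + e) ` A \<longleftrightarrow> - w + z \<in> A"
proof
  assume "z \<in> (\<lambda>e. w + e) ` A"
  then obtain e where "e \<in> A" "z = w + e" by auto
  then show "- w + z \<in> A" by (simp add: add.assoc[symmetric])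
next
  assume "- w + z \<in> A"
  moreover have "z = w + (- w + z)" by (simp add: add.assoc[symmetric])
  ultimately show "z \<in> (\<lambda>e. w + e) ` A" by blast
qed

theorem lemma4p6:
  fixes ten :: "'a::{complex_hilbert, second_countable_topology} \<Rightarrow>
                'b::{complex_hilbert, second_countable_topology} \<Rightarrow> 'h::complex_hilbert"
    and \<mu> :: "'g::{topological_group_add, t2_space, second_countable_topology} measure"
    and E :: "nat \<Rightarrow> 'g set"
    and \<psi> :: "'g \<Rightarrow> 'b"
    and T :: "'h \<Rightarrow> 'h"
    and \<omega> :: "'g \<Rightarrow> real"
  assumes G_lc: "locally_compact_type TYPE('g)"
    and haar: "left_haar \<mu>"
    and E_open: "\<And>N. N \<ge> 1 \<Longrightarrow> open (E N)"
    and E_precompact: "\<And>N. N \<ge> 1 \<Longrightarrow> compact (closure (E N))"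
    and E_mono: "\<And>N. N \<ge> 1 \<Longrightarrow> E N \<subseteq> E (N + 1)"
    and E_symm: "\<And>N. N \<ge> 1 \<Longrightarrow> uminus ` E N = E N"
    and E_mult: "\<And>N x y. N \<ge> 1 \<Longrightarrow> x \<in> E N \<Longrightarrow> y \<in> E N \<Longrightarrow> x + y \<in> E (2 * N)"
    and E_cover: "(\<Union>N\<in>{1..}. E N) = UNIV"
    and \<psi>_bounded: "\<exists>B. \<forall>z. norm (\<psi> z) \<le> B"
    and \<psi>_cont: "continuous_on UNIV \<psi>"
    and frame: "cont_parseval_frame \<mu> \<psi>"
    and tensor: "hilbert_tensor ten"
    and T_bounded: "bounded_clinear T"
    and T_ploc: "partially_localized \<mu> E (Tloc ten \<psi> T) \<omega>"
    and T_wc: "weakly_compact E (Tloc ten \<psi> T)"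
  shows "(\<lambda>N. SUP f\<in>{f. norm f \<le> 1}.
            \<integral>\<^sup>+ z \<in> - E N. ennreal ((norm (pinner ten (T f) (\<psi> z)))\<^sup>2) \<partial>\<mu>)
         \<longlonglongrightarrow> 0"
proof -
  have sets_mu: "sets \<mu> = sets borel" using haar by (simp add: left_haar_def)
  interpret setting ten \<mu> \<psi>
    by unfold_locales (use tensor frame sets_mu \<psi>_cont in auto)
  have Tbl: "bounded_linear T" using T_bounded by (simp add: bounded_clinear_def)
  interpret T: bounded_linear T by (rule Tbl)
  define L where "L = Tloc ten \<psi> T"
  define kk where "kk p = ennreal (onorm (L (fst p) (snd p)))" for p
  have sets_pair: "sets (\<mu> \<Otimes>\<^sub>M \<mu>) = sets borel"
  proof -
    have "sets (\<mu> \<Otimes>\<^sub>M \<mu>) = sets (borel \<Otimes>\<^sub>M (borel :: 'g measure))"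
      by (rule sets_pair_measure_cong[OF sets_mu sets_mu])
    also have "\<dots> = sets (borel :: ('g \<times> 'g) measure)" by (subst borel_prod) (rule refl)
    finally show ?thesis .
  qed
  have meas_pair: "measurable (\<mu> \<Otimes>\<^sub>M \<mu>) N' = measurable borel N'" for N' :: "'c measure"
    by (rule measurable_cong_sets) (simp_all add: sets_pair)
  have space_pair[simp]: "space (\<mu> \<Otimes>\<^sub>M \<mu>) = UNIV" by (simp add: space_pair_measure)
  have kk_meas[measurable]: "kk \<in> borel_measurable (\<mu> \<Otimes>\<^sub>M \<mu>)"
  proof -
    obtain D :: "'a set" where D: "countable D" "\<And>X. open X \<Longrightarrow> X \<noteq> {} \<Longrightarrow> \<exists>d\<in>D. d \<in> X"
      using countable_dense_exists by blast
    have kk_eq: "kk p = (SUP d\<in>D. ennreal (norm (L (fst p) (snd p) d) / norm d))" for p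
      unfolding kk_def L_def by (rule onorm_SUP_dense[OF Tloc_bl[OF Tbl] D(2)])
    have cont: "continuous_on UNIV (\<lambda>p. L (fst p) (snd p) d)" for d
    proof -
      have c1: "continuous_on UNIV (\<lambda>p::'g\<times>'g. T (ten d (\<psi> (fst p))))"
        by (intro T.continuous_on bounded_linear.continuous_on[OF bl_ten2]
            continuous_on_compose2[OF \<psi>_cont continuous_on_fst]) auto
      have c2: "continuous_on UNIV (\<lambda>p::'g\<times>'g. \<psi> (snd p))"
        by (intro continuous_on_compose2[OF \<psi>_cont continuous_on_snd]) auto
      show ?thesis unfolding L_def Tloc_def
        using bounded_bilinear.continuous_on[OF bb_pinner c1 c2] by simp
    qed
    have "(\<lambda>p. ennreal (norm (L (fst p) (snd p) d) / norm d)) \<in> borel_measurable (\<mu> \<Otimes>\<^sub>M \<mu>)" for d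
    proof -
      have "(\<lambda>p. L (fst p) (snd p) d) \<in> borel_measurable borel"
        by (rule borel_measurable_continuous_onI[OF cont])
      then have "(\<lambda>p. ennreal (norm (L (fst p) (snd p) d) / norm d)) \<in> borel_measurable borel"
        by measurable
      then show ?thesis by (simp add: meas_pair)
    qed
    then show ?thesis unfolding kk_eq[abs_def] using D(1) by measurable
  qed
  have kk_w[measurable]: "(\<lambda>w. kk (w, z)) \<in> borel_measurable \<mu>" for z
    using measurable_compose[OF measurable_Pair2'[of z \<mu> \<mu>] kk_meas] by simp
  have pw: "ennreal (norm (W (T f) z)) \<le> (\<integral>\<^sup>+w. kk (w, z) * ennreal (norm (W f w)) \<partial>\<mu>)" for f z
    using pointwise[OF Tbl, of z f] kk_w[of z] by (simp add: kk_def L_def)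
  have haar_inv: "emeasure \<mu> ((\<lambda>a. z + a) ` A) = emeasure \<mu> A" if "A \<in> sets borel" for z A
    using haar that unfolding left_haar_def by blast
  have haar_fin: "emeasure \<mu> K < \<infinity>" if "compact K" for K
    using haar that unfolding left_haar_def by blast
  have E_borel: "E M \<in> sets borel" if "M \<ge> 1" for M using E_open[OF that] by simp
  have E_fin: "emeasure \<mu> (E M) < \<infinity>" if M: "M \<ge> 1" for M
  proof -
    have "emeasure \<mu> (E M) \<le> emeasure \<mu> (closure (E M))"
      by (rule emeasure_mono) (auto simp: sets_mu closure_subset)
    also have "\<dots> < \<infinity>" by (rule haar_fin[OF E_precompact[OF M]])
    finally show ?thesis .
  qed
  have sf: "sigma_finite_measure \<mu>"
  proof
    show "\<exists>A::'g set set. countable A \<and> A \<subseteq> sets \<mu> \<and> \<Union>A = space \<mu> \<and> (\<forall>a\<in>A. emeasure \<mu> a \<noteq> \<infinity>)"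
    proof (intro exI[of _ "range (\<lambda>n. closure (E (Suc n)))"] conjI)
      show "countable (range (\<lambda>n. closure (E (Suc n))))" by simp
      show "range (\<lambda>n. closure (E (Suc n))) \<subseteq> sets \<mu>" by (auto simp: sets_mu)
      have "x \<in> (\<Union>n. closure (E (Suc n)))" for x
      proof -
        from E_cover obtain N where N: "N \<ge> 1" "x \<in> E N" by (metis UNIV_I UN_E atLeast_iff)
        then have "x \<in> closure (E (Suc (N - 1)))" using closure_subset by auto
        then show ?thesis by blast
      qed
      then show "\<Union> (range (\<lambda>n. closure (E (Suc n)))) = space \<mu>" by auto
      show "\<forall>a\<in>range (\<lambda>n. closure (E (Suc n))). emeasure \<mu> a \<noteq> \<infinity>"
        using haar_fin E_precompact by (auto simp: less_top)
    qed
  qed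
  have \<omega>_cont: "continuous_on UNIV \<omega>" and \<omega>_pos: "\<And>z. \<omega> z > 0"
    and C1_fin: "(SUP z. ennreal (1 / \<omega> z) * (\<integral>\<^sup>+ w. ennreal (onorm (L z w) * \<omega> w) \<partial>\<mu>)) < \<infinity>"
    and \<delta>_lim: "(\<lambda>N. SUP w. ennreal (1 / \<omega> w) *
         (\<integral>\<^sup>+ z \<in> - ((\<lambda>e. w + e) ` E N). ennreal (onorm (L z w) * \<omega> z) \<partial>\<mu>)) \<longlonglongrightarrow> 0"
    using T_ploc unfolding partially_localized_def L_def by auto
  have \<omega>_meas[measurable]: "\<omega> \<in> borel_measurable \<mu>"
    unfolding measurable_mu by (rule borel_measurable_continuous_onI[OF \<omega>_cont])
  define C1 where "C1 = (SUP z. ennreal (1 / \<omega> z) * (\<integral>\<^sup>+ w. ennreal (onorm (L z w) * \<omega> w) \<partial>\<mu>))"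
  define \<delta> where "\<delta> N = (SUP w. ennreal (1 / \<omega> w) *
         (\<integral>\<^sup>+ z \<in> - ((\<lambda>e. w + e) ` E N). ennreal (onorm (L z w) * \<omega> z) \<partial>\<mu>))" for N
  have C1_bound: "(\<integral>\<^sup>+ z. ennreal (onorm (L w z) * \<omega> z) \<partial>\<mu>) \<le> C1 * ennreal (\<omega> w)" for w
    by (rule sup_unpack[OF \<omega>_pos]) (unfold C1_def, rule SUP_upper, simp)
  have \<delta>_bound: "(\<integral>\<^sup>+ w \<in> - ((\<lambda>e. z + e) ` E N). ennreal (onorm (L w z) * \<omega> w) \<partial>\<mu>) \<le> \<delta> N * ennreal (\<omega> z)" for z N
    by (rule sup_unpack[OF \<omega>_pos]) (unfold \<delta>_def, rule SUP_upper, simp)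
  interpret sfm: sigma_finite_measure \<mu> by (rule sf)
  have onorm_nn: "0 \<le> onorm (L w z)" for w z
    unfolding L_def by (rule onorm_pos_le[OF Tloc_bl[OF Tbl]])
  have kk_eq: "kk (w, z) = ennreal (onorm (L w z))" for w z by (simp add: kk_def)
  define Near where "Near M = {p. fst p \<in> (\<lambda>e. snd p + e) ` E M}" for M
  have Near_eq: "Near M = (\<lambda>p. - snd p + fst p) -` E M" for M
    unfolding Near_def by (auto simp: mem_translate)
  have Near_sets[measurable]: "Near M \<in> sets (\<mu> \<Otimes>\<^sub>M \<mu>)" if "M \<ge> 1" for M
  proof -
    have "continuous_on UNIV (\<lambda>p::'g\<times>'g. - snd p + fst p)" by (intro continuous_intros)
    then have "open (Near M)" unfolding Near_eq using E_open[OF that] by (intro open_vimage) auto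
    then show ?thesis by (simp add: sets_pair)
  qed
  have trans_sets: "(\<lambda>e. z + e) ` E M \<in> sets \<mu>" if "M \<ge> 1" for z M
  proof -
    have "(\<lambda>e. z + e) ` E M = (\<lambda>w. - z + w) -` E M" by (auto simp: mem_translate)
    moreover have "continuous_on UNIV (\<lambda>w::'g. - z + w)" by (intro continuous_intros)
    ultimately have "open ((\<lambda>e. z + e) ` E M)" using E_open[OF that] by (auto intro: open_vimage)
    then show ?thesis by (simp add: sets_mu)
  qed
  have trans_meas: "emeasure \<mu> ((\<lambda>e. z + e) ` E M) = emeasure \<mu> (E M)" if "M \<ge> 1" for z M
    by (rule haar_inv[OF E_borel[OF that]])
  have far: "(\<integral>\<^sup>+z. (\<integral>\<^sup>+w. kk (w, z) * indicator (- Near M) (w, z) * \<phi> w \<partial>\<mu>)^2 \<partial>\<mu>)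
      \<le> \<delta> M * C1 * (\<integral>\<^sup>+w. \<phi> w ^ 2 \<partial>\<mu>)"
    if M: "M \<ge> 1" and [measurable]: "\<phi> \<in> borel_measurable \<mu>" for M \<phi>
  proof (rule schur[OF sf space_mu, of "\<lambda>p. kk p * indicator (- Near M) p" \<omega>])
    show "(\<lambda>p. kk p * indicator (- Near M) p) \<in> borel_measurable (\<mu> \<Otimes>\<^sub>M \<mu>)"
      using Near_sets[OF M] by measurable
    show "\<omega> \<in> borel_measurable \<mu>" "\<phi> \<in> borel_measurable \<mu>" "\<And>w. 0 < \<omega> w" by (auto simp: \<omega>_pos)
    fix z
    have "(\<integral>\<^sup>+w. kk (w, z) * indicator (- Near M) (w, z) * ennreal (\<omega> w) \<partial>\<mu>)
        = (\<integral>\<^sup>+ w \<in> - ((\<lambda>e. z + e) ` E M). ennreal (onorm (L w z) * \<omega> w) \<partial>\<mu>)"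
      by (intro nn_integral_cong)
         (auto simp: kk_eq Near_def indicator_def ennreal_mult onorm_nn less_imp_le[OF \<omega>_pos])
    also have "\<dots> \<le> \<delta> M * ennreal (\<omega> z)" by (rule \<delta>_bound)
    finally show "(\<integral>\<^sup>+w. kk (w, z) * indicator (- Near M) (w, z) * ennreal (\<omega> w) \<partial>\<mu>) \<le> \<delta> M * ennreal (\<omega> z)" .
  next
    fix w
    have "(\<integral>\<^sup>+z. kk (w, z) * indicator (- Near M) (w, z) * ennreal (\<omega> z) \<partial>\<mu>)
        \<le> (\<integral>\<^sup>+z. ennreal (onorm (L w z) * \<omega> z) \<partial>\<mu>)"
      by (intro nn_integral_mono)
         (auto simp: kk_eq indicator_def ennreal_mult onorm_nn less_imp_le[OF \<omega>_pos])
    also have "\<dots> \<le> C1 * ennreal (\<omega> w)" by (rule C1_bound)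
    finally show "(\<integral>\<^sup>+z. kk (w, z) * indicator (- Near M) (w, z) * ennreal (\<omega> z) \<partial>\<mu>) \<le> C1 * ennreal (\<omega> w)" .
  qed
  have near: "(\<integral>\<^sup>+z. (\<integral>\<^sup>+w. kk (w, z) * indicator (Near M) (w, z) * indicator (- E N) z * \<phi> w \<partial>\<mu>)^2 \<partial>\<mu>)
      \<le> (ennreal \<epsilon> * emeasure \<mu> (E M)) * (ennreal \<epsilon> * emeasure \<mu> (E M)) * (\<integral>\<^sup>+w. \<phi> w ^ 2 \<partial>\<mu>)"
    if M: "M \<ge> 1" and N: "N \<ge> 1" and [measurable]: "\<phi> \<in> borel_measurable \<mu>"
      and P: "\<And>z w. z \<notin> E N \<Longrightarrow> w \<in> (\<lambda>e. z + e) ` E M \<Longrightarrow> onorm (L w z) \<le> \<epsilon> \<and> z \<in> (\<lambda>e. w + e) ` E M"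
    for M N \<phi> \<epsilon>
  proof -
    have EN[measurable]: "E N \<in> sets \<mu>" using E_borel[OF N] sets_mu by simp
    have "(\<integral>\<^sup>+z. (\<integral>\<^sup>+w. kk (w, z) * indicator (Near M) (w, z) * indicator (- E N) z * \<phi> w \<partial>\<mu>)^2 \<partial>\<mu>)
      \<le> (ennreal \<epsilon> * emeasure \<mu> (E M)) * (ennreal \<epsilon> * emeasure \<mu> (E M)) * (\<integral>\<^sup>+w. \<phi> w ^ 2 \<partial>\<mu>)"
    proof (rule schur[OF sf space_mu, of "\<lambda>p. kk p * indicator (Near M) p * indicator (- E N) (snd p)" "\<lambda>_. 1", simplified])
      show "(\<lambda>p. kk p * indicator (Near M) p * indicator (- E N) (snd p)) \<in> borel_measurable (\<mu> \<Otimes>\<^sub>M \<mu>)"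
        using Near_sets[OF M] by measurable
      show "\<phi> \<in> borel_measurable \<mu>" by simp
      fix z
      show "(\<integral>\<^sup>+w. kk (w, z) * indicator (Near M) (w, z) * indicator (- E N) z \<partial>\<mu>) \<le> ennreal \<epsilon> * emeasure \<mu> (E M)"
      proof -
        have "(\<integral>\<^sup>+w. kk (w, z) * indicator (Near M) (w, z) * indicator (- E N) z \<partial>\<mu>)
            \<le> (\<integral>\<^sup>+w. ennreal \<epsilon> * indicator ((\<lambda>e. z + e) ` E M) w \<partial>\<mu>)"
        proof (intro nn_integral_mono)
          fix w
          show "kk (w, z) * indicator (Near M) (w, z) * indicator (- E N) z \<le> ennreal \<epsilon> * indicator ((\<lambda>e. z + e) ` E M) w"
          proof (cases "w \<in> (\<lambda>e. z + e) ` E M \<and> z \<notin> E N")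
            case True
            then have "onorm (L w z) \<le> \<epsilon>" using P by blast
            then show ?thesis using True by (simp add: kk_eq Near_def indicator_def ennreal_leI)
          next
            case False
            then show ?thesis by (auto simp: Near_def indicator_def)
          qed
        qed
        also have "\<dots> = ennreal \<epsilon> * emeasure \<mu> (E M)"
          by (simp add: nn_integral_cmult_indicator trans_sets[OF M] trans_meas[OF M])
        finally show ?thesis .
      qed
    next
      fix w
      show "(\<integral>\<^sup>+z. kk (w, z) * indicator (Near M) (w, z) * indicator (- E N) z \<partial>\<mu>) \<le> ennreal \<epsilon> * emeasure \<mu> (E M)"
      proof -
        have "(\<integral>\<^sup>+z. kk (w, z) * indicator (Near M) (w, z) * indicator (- E N) z \<partial>\<mu>)
            \<le> (\<integral>\<^sup>+z. ennreal \<epsilon> * indicator ((\<lambda>e. w + e) ` E M) z \<partial>\<mu>)"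
        proof (intro nn_integral_mono)
          fix z
          show "kk (w, z) * indicator (Near M) (w, z) * indicator (- E N) z \<le> ennreal \<epsilon> * indicator ((\<lambda>e. w + e) ` E M) z"
          proof (cases "w \<in> (\<lambda>e. z + e) ` E M \<and> z \<notin> E N")
            case True
            then have "onorm (L w z) \<le> \<epsilon>" "z \<in> (\<lambda>e. w + e) ` E M" using P by blast+
            then show ?thesis using True by (simp add: kk_eq Near_def indicator_def ennreal_leI)
          next
            case False
            then show ?thesis by (auto simp: Near_def indicator_def)
          qed
        qed
        also have "\<dots> = ennreal \<epsilon> * emeasure \<mu> (E M)"
          by (simp add: nn_integral_cmult_indicator trans_sets[OF M] trans_meas[OF M])
        finally show ?thesis .
      qed
    qed
    then show ?thesis .
  qed
  have bound: "(\<integral>\<^sup>+ z \<in> - E N. ennreal ((norm (pinner ten (T f) (\<psi> z)))\<^sup>2) \<partial>\<mu>)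
      \<le> 2 * ((ennreal \<epsilon> * emeasure \<mu> (E M)) * (ennreal \<epsilon> * emeasure \<mu> (E M))) + 2 * (\<delta> M * C1)"
    if M: "M \<ge> 1" and N: "N \<ge> 1" and f: "norm f \<le> 1"
      and P: "\<And>z w. z \<notin> E N \<Longrightarrow> w \<in> (\<lambda>e. z + e) ` E M \<Longrightarrow> onorm (L w z) \<le> \<epsilon> \<and> z \<in> (\<lambda>e. w + e) ` E M"
    for M N f \<epsilon>
  proof -
    have EN[measurable]: "E N \<in> sets \<mu>" using E_borel[OF N] sets_mu by simp
    have NM[measurable]: "Near M \<in> sets (\<mu> \<Otimes>\<^sub>M \<mu>)" by (rule Near_sets[OF M])
    define \<phi> where "\<phi> w = ennreal (norm (W f w))" for w
    have \<phi>m[measurable]: "\<phi> \<in> borel_measurable \<mu>" unfolding \<phi>_def by measurable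
    have \<phi>2: "(\<integral>\<^sup>+w. \<phi> w ^ 2 \<partial>\<mu>) \<le> 1"
    proof -
      have "(\<integral>\<^sup>+w. \<phi> w ^ 2 \<partial>\<mu>) = (\<integral>\<^sup>+w. ennreal ((norm (W f w))^2) \<partial>\<mu>)"
        by (simp add: \<phi>_def ennreal_power)
      also have "\<dots> \<le> ennreal ((norm f)^2)" by (rule bessel)
      also have "\<dots> \<le> 1" using f by (simp add: power_le_one)
      finally show ?thesis .
    qed
    define K1 where "K1 p = kk p * indicator (Near M) p * indicator (- E N) (snd p)" for p
    define K2 where "K2 p = kk p * indicator (- Near M) p" for p
    have K1m[measurable]: "K1 \<in> borel_measurable (\<mu> \<Otimes>\<^sub>M \<mu>)" unfolding K1_def by measurable
    have K2m[measurable]: "K2 \<in> borel_measurable (\<mu> \<Otimes>\<^sub>M \<mu>)" unfolding K2_def by measurable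
    define I1 where "I1 z = (\<integral>\<^sup>+w. K1 (w, z) * \<phi> w \<partial>\<mu>)" for z
    define I2 where "I2 z = (\<integral>\<^sup>+w. K2 (w, z) * \<phi> w \<partial>\<mu>)" for z
    have I1m[measurable]: "I1 \<in> borel_measurable \<mu>" unfolding I1_def by measurable
    have I2m[measurable]: "I2 \<in> borel_measurable \<mu>" unfolding I2_def by measurable
    have split: "ennreal (norm (W (T f) z)) \<le> I1 z + I2 z" if z: "z \<notin> E N" for z
    proof -
      have "ennreal (norm (W (T f) z)) \<le> (\<integral>\<^sup>+w. kk (w, z) * \<phi> w \<partial>\<mu>)" unfolding \<phi>_def by (rule pw)
      also have "\<dots> = (\<integral>\<^sup>+w. K1 (w, z) * \<phi> w + K2 (w, z) * \<phi> w \<partial>\<mu>)"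
        by (intro nn_integral_cong) (auto simp: K1_def K2_def indicator_def z distrib_right[symmetric])
      also have "\<dots> = I1 z + I2 z" unfolding I1_def I2_def by (rule nn_integral_add) measurable
      finally show ?thesis .
    qed
    have "(\<integral>\<^sup>+ z \<in> - E N. ennreal ((norm (pinner ten (T f) (\<psi> z)))\<^sup>2) \<partial>\<mu>)
        \<le> (\<integral>\<^sup>+ z. 2 * (I1 z)^2 + 2 * (I2 z)^2 \<partial>\<mu>)"
    proof (intro nn_integral_mono)
      fix z
      show "ennreal ((norm (pinner ten (T f) (\<psi> z)))\<^sup>2) * indicator (- E N) z \<le> 2 * (I1 z)^2 + 2 * (I2 z)^2"
      proof (cases "z \<in> E N")
        case False
        have "ennreal ((norm (pinner ten (T f) (\<psi> z)))\<^sup>2) = (ennreal (norm (W (T f) z)))^2"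
          by (simp add: W_def ennreal_power)
        also have "\<dots> \<le> (I1 z + I2 z)^2" by (intro power_mono split False) auto
        also have "\<dots> \<le> 2 * (I1 z)^2 + 2 * (I2 z)^2" by (rule sq_sum_ennreal)
        finally show ?thesis using False by simp
      qed simp
    qed
    also have "\<dots> = 2 * (\<integral>\<^sup>+ z. (I1 z)^2 \<partial>\<mu>) + 2 * (\<integral>\<^sup>+ z. (I2 z)^2 \<partial>\<mu>)"
      by (subst nn_integral_add) (auto simp: nn_integral_cmult)
    also have "(\<integral>\<^sup>+ z. (I1 z)^2 \<partial>\<mu>) \<le> (ennreal \<epsilon> * emeasure \<mu> (E M)) * (ennreal \<epsilon> * emeasure \<mu> (E M)) * (\<integral>\<^sup>+w. \<phi> w ^ 2 \<partial>\<mu>)"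
      unfolding I1_def K1_def using near[OF M N \<phi>m P] by (simp add: mult.assoc)
    also have "\<dots> \<le> (ennreal \<epsilon> * emeasure \<mu> (E M)) * (ennreal \<epsilon> * emeasure \<mu> (E M)) * 1"
      by (intro mult_left_mono \<phi>2) auto
    also have "(\<integral>\<^sup>+ z. (I2 z)^2 \<partial>\<mu>) \<le> \<delta> M * C1 * (\<integral>\<^sup>+w. \<phi> w ^ 2 \<partial>\<mu>)"
      unfolding I2_def K2_def using far[OF M \<phi>m] by simp
    also have "\<dots> \<le> \<delta> M * C1 * 1"
      by (intro mult_left_mono \<phi>2) auto
    finally show ?thesis by (simp add: mult_left_mono add_mono)
  qed
  obtain c1 where c1: "C1 = ennreal c1" "c1 \<ge> 0"
    using C1_fin unfolding C1_def[symmetric] by (cases C1) auto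
  have \<delta>_lim': "\<delta> \<longlonglongrightarrow> 0" using \<delta>_lim unfolding \<delta>_def[abs_def] .
  show ?thesis
  proof (rule order_tendstoI)
    fix a :: ennreal assume "a < 0" then show "eventually (\<lambda>N. a < (SUP f\<in>{f. norm f \<le> 1}.
            \<integral>\<^sup>+ z \<in> - E N. ennreal ((norm (pinner ten (T f) (\<psi> z)))\<^sup>2) \<partial>\<mu>)) sequentially"
      by simp
  next
    fix a :: ennreal assume a: "0 < a"
    obtain b where b: "0 < b" "b < a" using dense[OF a] by blast
    then obtain \<eta> where \<eta>: "b = ennreal \<eta>" "\<eta> > 0"
      by (cases b) (auto simp: top_unique)
    define \<delta>0 where "\<delta>0 = \<eta> / (8 * (c1 + 1))"
    have \<delta>0: "\<delta>0 > 0" using \<eta> c1 by (simp add: \<delta>0_def)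
    have "eventually (\<lambda>M. \<delta> M < ennreal \<delta>0) sequentially"
      using order_tendstoD(2)[OF \<delta>_lim'] \<delta>0 by simp
    then obtain M0 where M0: "\<And>M. M \<ge> M0 \<Longrightarrow> \<delta> M < ennreal \<delta>0" by (auto simp: eventually_sequentially)
    define M where "M = max M0 1"
    have M: "M \<ge> 1" "\<delta> M < ennreal \<delta>0" using M0[of M] by (auto simp: M_def)
    obtain mE where mE: "emeasure \<mu> (E M) = ennreal mE" "mE \<ge> 0"
      using E_fin[OF M(1)] by (cases "emeasure \<mu> (E M)") auto
    define \<epsilon> where "\<epsilon> = sqrt (\<eta> / 8) / (mE + 1)"
    have \<epsilon>: "\<epsilon> > 0" using \<eta> mE by (simp add: \<epsilon>_def)
    obtain Kc where Kc: "compact Kc" "\<And>z. z \<notin> Kc \<Longrightarrow> (\<forall>w\<in>(\<lambda>e. z + e) ` E M. onorm (L z w) \<le> \<epsilon>)"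
      using T_wc M(1) \<epsilon> unfolding weakly_compact_def L_def by blast
    define Q where "Q = (\<lambda>p. fst p + snd p) ` (Kc \<times> closure (E M))"
    have cQ: "compact Q" unfolding Q_def
      by (intro compact_continuous_image compact_Times Kc(1) E_precompact M(1) continuous_intros)
    have QU: "Q \<subseteq> (\<Union>N\<in>{1..}. E N)" using E_cover by simp
    have opn: "\<And>T. T \<in> {1..} \<Longrightarrow> open (E T)" using E_open by auto
    obtain J where J: "J \<subseteq> {1..}" "finite J" "Q \<subseteq> (\<Union>N\<in>J. E N)"
      by (rule compactE_image[OF cQ opn QU])
    define N0 where "N0 = Max (insert 1 J)"
    have N0: "N0 \<ge> 1" using J by (simp add: N0_def)
    have QN: "Q \<subseteq> E N" if "N \<ge> N0" for N
    proof -
      have "E j \<subseteq> E N" if "j \<in> J" for j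
      proof (rule E_mono_gen[where E=E, OF E_mono])
        show "1 \<le> j" using J that by auto
        have "j \<le> N0" unfolding N0_def using J that by (intro Max_ge) auto
        then show "j \<le> N" using \<open>N \<ge> N0\<close> by simp
      qed
      then show ?thesis using J(3) by blast
    qed
    have P: "onorm (L w z) \<le> \<epsilon> \<and> z \<in> (\<lambda>e. w + e) ` E M"
      if N: "N \<ge> N0" and z: "z \<notin> E N" and w: "w \<in> (\<lambda>e. z + e) ` E M" for N z w
    proof -
      from w obtain e where e: "e \<in> E M" "w = z + e" by auto
      have me: "- e \<in> E M" using E_symm[OF M(1)] e(1) by (metis imageI)
      have zw: "z = w + - e" using e(2) by (simp add: add.assoc)
      have zin: "z \<in> (\<lambda>e. w + e) ` E M" using zw me by blast
      have "w \<notin> Kc"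
      proof
        assume "w \<in> Kc"
        then have "z \<in> Q" unfolding Q_def using zw me closure_subset
          by (intro image_eqI[of _ _ "(w, - e)"]) auto
        then show False using QN[OF N] z by blast
      qed
      then show ?thesis using Kc(2) zin by blast
    qed
    have total: "(\<integral>\<^sup>+ z \<in> - E N. ennreal ((norm (pinner ten (T f) (\<psi> z)))\<^sup>2) \<partial>\<mu>) \<le> ennreal (\<eta> / 2)"
      if N: "N \<ge> N0" and f: "norm f \<le> 1" for N f
    proof -
      have "(\<integral>\<^sup>+ z \<in> - E N. ennreal ((norm (pinner ten (T f) (\<psi> z)))\<^sup>2) \<partial>\<mu>)
          \<le> 2 * ((ennreal \<epsilon> * emeasure \<mu> (E M)) * (ennreal \<epsilon> * emeasure \<mu> (E M))) + 2 * (\<delta> M * C1)"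
        by (rule bound[OF M(1) _ f P]) (use N N0 in auto)
      also have A: "(ennreal \<epsilon> * emeasure \<mu> (E M)) * (ennreal \<epsilon> * emeasure \<mu> (E M)) \<le> ennreal (\<eta> / 8)"
      proof -
        have "(ennreal \<epsilon> * emeasure \<mu> (E M)) * (ennreal \<epsilon> * emeasure \<mu> (E M)) = ennreal ((\<epsilon> * mE)^2)"
          using \<epsilon> mE by (simp add: ennreal_mult[symmetric] power2_eq_square)
        moreover have "(\<epsilon> * mE)^2 \<le> \<eta> / 8"
        proof -
          have "\<epsilon> * mE \<le> sqrt (\<eta> / 8)"
            using mE \<eta> by (simp add: \<epsilon>_def divide_le_eq field_simps mult_left_mono)
          then have "(\<epsilon> * mE)^2 \<le> (sqrt (\<eta> / 8))^2" using \<epsilon> mE by (intro power_mono) auto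
          then show ?thesis using \<eta> by simp
        qed
        ultimately show ?thesis by (simp add: ennreal_leI)
      qed
      have B: "\<delta> M * C1 \<le> ennreal (\<eta> / 8)"
      proof -
        have "\<delta> M * C1 \<le> ennreal \<delta>0 * ennreal c1"
          unfolding c1(1) using M(2) by (intro mult_right_mono) auto
        also have "ennreal \<delta>0 * ennreal c1 = ennreal (\<delta>0 * c1)" using \<delta>0 c1 by (simp add: ennreal_mult)
        also have "\<delta>0 * c1 \<le> \<eta> / 8"
          using \<eta> c1 by (simp add: \<delta>0_def field_simps)
        finally show ?thesis by (simp add: ennreal_leI)
      qed
      have "2 * ((ennreal \<epsilon> * emeasure \<mu> (E M)) * (ennreal \<epsilon> * emeasure \<mu> (E M))) + 2 * (\<delta> M * C1)
          \<le> 2 * ennreal (\<eta> / 8) + 2 * ennreal (\<eta> / 8)"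
        by (intro add_mono mult_left_mono A B) auto
      finally have "(\<integral>\<^sup>+ z \<in> - E N. ennreal ((norm (pinner ten (T f) (\<psi> z)))\<^sup>2) \<partial>\<mu>)
          \<le> 2 * ennreal (\<eta> / 8) + 2 * ennreal (\<eta> / 8)" .
      also have "\<dots> = ennreal (\<eta> / 2)"
      proof -
        have t: "2 * ennreal (\<eta> / 8) = ennreal (\<eta> / 4)"
        proof -
          have "ennreal (2 * (\<eta> / 8)) = ennreal 2 * ennreal (\<eta> / 8)" using \<eta> by (intro ennreal_mult) auto
          then show ?thesis by simp
        qed
        have "ennreal (\<eta> / 4 + \<eta> / 4) = ennreal (\<eta> / 4) + ennreal (\<eta> / 4)" using \<eta> by (intro ennreal_plus) auto
        then show ?thesis unfolding t by simp
      qed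
      finally show ?thesis .
    qed
    show "eventually (\<lambda>N. (SUP f\<in>{f. norm f \<le> 1}.
            \<integral>\<^sup>+ z \<in> - E N. ennreal ((norm (pinner ten (T f) (\<psi> z)))\<^sup>2) \<partial>\<mu>) < a) sequentially"
      unfolding eventually_sequentially
    proof (intro exI allI impI)
      fix N assume N: "N \<ge> N0"
      have "(SUP f\<in>{f. norm f \<le> 1}. \<integral>\<^sup>+ z \<in> - E N. ennreal ((norm (pinner ten (T f) (\<psi> z)))\<^sup>2) \<partial>\<mu>)
          \<le> ennreal (\<eta> / 2)"
        by (intro SUP_least total N) auto
      also have "ennreal (\<eta> / 2) < ennreal \<eta>" using \<eta>(2) by (simp add: ennreal_less_iff)
      also have "\<dots> < a" using b \<eta> by simp
      finally show "(SUP f\<in>{f. norm f \<le> 1}. \<integral>\<^sup>+ z \<in> - E N. ennreal ((norm (pinner ten (T f) (\<psi> z)))\<^sup>2) \<partial>\<mu>) < a" .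
    qed
  qed
qed


end
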